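(* Let $\lambda>0$ and let $f(x)=ax^{\lambda}+b+\int_0^\infty\gamma(\lambda,xt)\,\frac{d\mu(t)}{t^{\lambda}}$, $x>0$, where $a,b\ge 0$ and $\mu$ is a positive measure on $(0,\infty)$ for which the integral converges for all $x>0$. For each positive integer $n$ define $$f_n(x)=ax^{\lambda}+b+\frac{\Gamma(\lambda+n)}{\Gamma(n)}\int_0^\infty B\Big(\lambda,n;\frac{x}{x+n/t}\Big)\frac{d\mu(t)}{t^{\lambda}}.$$ Then $f_n\in\mathcal T_{\lambda,1-n}$ for each $n$, and $\lim_{n\to\infty}f_n(x)=f(x)$ for all $x>0$.
   Context: $\gamma(\lambda,x)=\int_0^x e^{-t}t^{\lambda-1}\,dt$ is the incomplete gamma function and $B(a_1,a_2;u)=\int_0^u t^{a_1-1}(1-t)^{a_2-1}\,dt$ ($a_1>0$, $a_2\in\mathbb R$, $u\in[0,1)$) is the incomplete Beta function. A function $\varphi$ on $(0,\infty)$ is completely monotonic of order $\alpha$ if $x^{\alpha}\varphi(x)$ is completely monotonic. For $\lambda>0$ and $\alpha<\lambda+1$, $\mathcal T_{\lambda,\alpha}$ (the $(\lambda,\alpha)$-Thorin–Bernstein functions) is the class of functions of the form $f(x)=ax^{\lambda}+b+\int_0^\infty\gamma(\lambda,xt)\varphi(t)\,dt$ with $a,b\ge 0$ and $\varphi$ completely monotonic of order $\alpha$. *)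

theory Defs
  imports "HOL-Analysis.Analysis"
begin

definition inc_gamma :: "real \<Rightarrow> real \<Rightarrow> real" where
  "inc_gamma lam x = (LBINT t=0..x. exp (- t) * t powr (lam - 1))"

definition inc_beta :: "real \<Rightarrow> real \<Rightarrow> real \<Rightarrow> real" where
  "inc_beta a1 a2 u = (LBINT t=0..u. t powr (a1 - 1) * (1 - t) powr (a2 - 1))"

definition completely_monotonic :: "(real \<Rightarrow> real) \<Rightarrow> bool" where
  "completely_monotonic \<phi> \<longleftrightarrow>
     (\<forall>k::nat. \<forall>x>0. (deriv ^^ k) \<phi> differentiable (at x)) \<and>
     (\<forall>k::nat. \<forall>x>0. (-1) ^ k * (deriv ^^ k) \<phi> x \<ge> 0)"

definition cm_order :: "real \<Rightarrow> (real \<Rightarrow> real) \<Rightarrow> bool" where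
  "cm_order \<alpha> \<phi> \<longleftrightarrow> completely_monotonic (\<lambda>x. x powr \<alpha> * \<phi> x)"

definition thorin_bernstein :: "real \<Rightarrow> real \<Rightarrow> (real \<Rightarrow> real) set" where
  "thorin_bernstein lam \<alpha> = {f. \<exists>a b \<phi>. a \<ge> 0 \<and> b \<ge> 0 \<and> cm_order \<alpha> \<phi> \<and>
     (\<forall>x>0. set_integrable lborel {0<..} (\<lambda>t. inc_gamma lam (x * t) * \<phi> t) \<and>
            f x = a * x powr lam + b + (\<integral>t\<in>{0<..}. inc_gamma lam (x * t) * \<phi> t \<partial>lborel))}"

end

theory Submission
  imports Defs
begin

lemma nn_fin_integrable:
  fixes f :: "'a \<Rightarrow> real"
  assumes "f \<in> borel_measurable M" "\<And>x. f x \<ge> 0" "(\<integral>\<^sup>+x. ennreal (f x) \<partial>M) < \<infinity>"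
  shows "integrable M f" "(\<integral>\<^sup>+x. ennreal (f x) \<partial>M) = ennreal (integral\<^sup>L M f)"
proof -
  show i: "integrable M f" using assms by (intro integrableI_nonneg) auto
  show "(\<integral>\<^sup>+x. ennreal (f x) \<partial>M) = ennreal (integral\<^sup>L M f)"
    using assms i by (intro nn_integral_eq_integral) (auto simp: AE_I2)
qed

lemma inc_gamma_nn:
  assumes lam: "lam > 0" and y: "y \<ge> 0"
  shows "ennreal (inc_gamma lam y) = (\<integral>\<^sup>+v. ennreal (indicator {0<..<y} v * (exp (- v) * v powr (lam - 1))) \<partial>lborel)"
    and "(\<integral>\<^sup>+v. ennreal (indicator {0<..<y} v * (exp (- v) * v powr (lam - 1))) \<partial>lborel) < \<infinity>"
proof -
  let ?f = "\<lambda>v. indicator {0<..<y} v * (exp (- v) * v powr (lam - 1))"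
  have "(\<integral>\<^sup>+v. ennreal (?f v) \<partial>lborel) \<le> (\<integral>\<^sup>+ t. ennreal (indicator {0..} t * t powr (lam - 1) / exp t) \<partial>lborel)"
  proof (intro nn_integral_mono ennreal_leI)
    fix v :: real
    show "?f v \<le> indicator {0..} v * v powr (lam - 1) / exp v"
    proof (cases "0 < v \<and> v < y")
      case True
      then show ?thesis by (simp add: exp_minus divide_inverse mult.commute)
    next
      case False
      then have "?f v = 0" by (simp add: indicator_def)
      moreover have "0 \<le> indicator {0..} v * v powr (lam - 1) / exp v" by simp
      ultimately show ?thesis by linarith
    qed
  qed
  also have "\<dots> = ennreal (Gamma lam)" using Gamma_conv_nn_integral_real[OF lam] by (rule sym)
  finally have le: "(\<integral>\<^sup>+v. ennreal (?f v) \<partial>lborel) \<le> ennreal (Gamma lam)" .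
  show fin: "(\<integral>\<^sup>+v. ennreal (?f v) \<partial>lborel) < \<infinity>" using le_less_trans[OF le ennreal_less_top] by simp
  have m: "?f \<in> borel_measurable lborel" by measurable
  note * = nn_fin_integrable[OF m _ fin]
  have "inc_gamma lam y = integral\<^sup>L lborel ?f"
    unfolding inc_gamma_def using y
    by (subst interval_integral_Ioo) (auto simp: set_lebesgue_integral_def)
  then show "ennreal (inc_gamma lam y) = (\<integral>\<^sup>+v. ennreal (?f v) \<partial>lborel)"
    using * by (simp add: indicator_def)
qed

lemma inc_beta_nn:
  assumes lam: "lam > 0" and m: "m > 0" and u: "0 \<le> u" "u \<le> 1"
  shows "ennreal (inc_beta lam m u) = (\<integral>\<^sup>+v. ennreal (indicator {0<..<u} v * (v powr (lam - 1) * (1 - v) powr (m - 1))) \<partial>lborel)"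
    and "(\<integral>\<^sup>+v. ennreal (indicator {0<..<u} v * (v powr (lam - 1) * (1 - v) powr (m - 1))) \<partial>lborel) \<le> ennreal (Beta lam m)"
proof -
  let ?f = "\<lambda>v. indicator {0<..<u} v * (v powr (lam - 1) * (1 - v) powr (m - 1))"
  have "(\<integral>\<^sup>+v. ennreal (?f v) \<partial>lborel) \<le> (\<integral>\<^sup>+ v. ennreal (v powr (lam - 1) * (1 - v) powr (m - 1)) * indicator {0..1} v \<partial>lborel)"
  proof (intro nn_integral_mono)
    fix v :: real
    show "ennreal (?f v) \<le> ennreal (v powr (lam - 1) * (1 - v) powr (m - 1)) * indicator {0..1} v"
    proof (cases "0 < v \<and> v < u")
      case True
      then show ?thesis using u by (simp add: indicator_def)
    next
      case False
      then have "?f v = 0" by (simp add: indicator_def)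
      then have "ennreal (?f v) = 0" by simp
      then show ?thesis by (metis zero_le)
    qed
  qed
  also have "\<dots> = ennreal (Beta lam m)"
    by (rule nn_integral_has_integral_lebesgue'[OF _ has_integral_Beta_real[OF lam m]]) simp
  finally show le: "(\<integral>\<^sup>+v. ennreal (?f v) \<partial>lborel) \<le> ennreal (Beta lam m)" .
  have fin: "(\<integral>\<^sup>+v. ennreal (?f v) \<partial>lborel) < \<infinity>" using le_less_trans[OF le ennreal_less_top] by simp
  have mm: "?f \<in> borel_measurable lborel" by measurable
  have nn: "\<And>v. ?f v \<ge> 0" by (simp add: indicator_def)
  note * = nn_fin_integrable[OF mm nn fin]
  have "inc_beta lam m u = integral\<^sup>L lborel ?f"
    unfolding inc_beta_def using u
    by (subst interval_integral_Ioo) (auto simp: set_lebesgue_integral_def)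
  then show "ennreal (inc_beta lam m u) = (\<integral>\<^sup>+v. ennreal (?f v) \<partial>lborel)"
    using * by (simp add: indicator_def)
qed

lemma inc_beta_nonneg:
  assumes "lam > 0" "m > 0" "0 \<le> u" "u \<le> 1"
  shows "inc_beta lam m u \<ge> 0"
  unfolding inc_beta_def using assms
  by (subst interval_integral_Ioo) (auto simp: set_lebesgue_integral_def indicator_def intro!: Bochner_Integration.integral_nonneg)

lemma inc_gamma_nonneg:
  assumes "y \<ge> 0"
  shows "inc_gamma lam y \<ge> 0"
  unfolding inc_gamma_def using assms
  by (subst interval_integral_Ioo) (auto simp: set_lebesgue_integral_def indicator_def intro!: Bochner_Integration.integral_nonneg)

lemma inc_beta_mono:
  assumes lam: "lam > 0" and m: "m > 0" and u: "0 \<le> u" "u \<le> u'" "u' \<le> 1"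
  shows "inc_beta lam m u \<le> inc_beta lam m u'"
proof -
  have "ennreal (inc_beta lam m u) \<le> ennreal (inc_beta lam m u')"
    unfolding inc_beta_nn(1)[OF lam m u(1) order.trans[OF u(2) u(3)]] inc_beta_nn(1)[OF lam m order.trans[OF u(1) u(2)] u(3)]
  proof (intro nn_integral_mono ennreal_leI)
    fix v :: real
    show "indicator {0<..<u} v * (v powr (lam - 1) * (1 - v) powr (m - 1)) \<le> indicator {0<..<u'} v * (v powr (lam - 1) * (1 - v) powr (m - 1))"
      using u by (auto simp: indicator_def)
  qed
  then show ?thesis using inc_beta_nonneg[OF lam m order.trans[OF u(1) u(2)] u(3)] by simp
qed

lemma inc_gamma_mono:
  assumes lam: "lam > 0" and y: "0 \<le> y" "y \<le> y'"
  shows "inc_gamma lam y \<le> inc_gamma lam y'"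
proof -
  have "ennreal (inc_gamma lam y) \<le> ennreal (inc_gamma lam y')"
    unfolding inc_gamma_nn(1)[OF lam y(1)] inc_gamma_nn(1)[OF lam order.trans[OF y]]
  proof (intro nn_integral_mono ennreal_leI)
    fix v :: real
    show "indicator {0<..<y} v * (exp (- v) * v powr (lam - 1)) \<le> indicator {0<..<y'} v * (exp (- v) * v powr (lam - 1))"
      using y by (auto simp: indicator_def)
  qed
  then show ?thesis using inc_gamma_nonneg[OF order.trans[OF y]] by simp
qed

lemma gamma_scaled:
  assumes a: "a > 0" and c: "c > 0"
  shows "(\<integral>\<^sup>+r. ennreal (indicator {0<..} r * (r powr (a - 1) * exp (- (c * r)))) \<partial>lborel) = ennreal (Gamma a / c powr a)"
proof -
  let ?I = "(\<integral>\<^sup>+r. ennreal (indicator {0<..} r * (r powr (a - 1) * exp (- (c * r)))) \<partial>lborel)"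
  have "ennreal (Gamma a) = (\<integral>\<^sup>+ t. ennreal (indicator {0..} t * t powr (a - 1) / exp t) \<partial>lborel)"
    by (rule Gamma_conv_nn_integral_real[OF a])
  also have "\<dots> = ennreal c * (\<integral>\<^sup>+ r. ennreal (indicator {0..} (0 + c * r) * (0 + c * r) powr (a - 1) / exp (0 + c * r)) \<partial>lborel)"
    using c by (subst nn_integral_real_affine[where c=c and t=0]) auto
  also have "(\<integral>\<^sup>+ r. ennreal (indicator {0..} (0 + c * r) * (0 + c * r) powr (a - 1) / exp (0 + c * r)) \<partial>lborel)
       = (\<integral>\<^sup>+ r. ennreal (c powr (a - 1)) * ennreal (indicator {0<..} r * (r powr (a - 1) * exp (- (c * r)))) \<partial>lborel)"
  proof (intro nn_integral_cong)
    fix r :: real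
    show "ennreal (indicator {0..} (0 + c * r) * (0 + c * r) powr (a - 1) / exp (0 + c * r)) =
          ennreal (c powr (a - 1)) * ennreal (indicator {0<..} r * (r powr (a - 1) * exp (- (c * r))))"
    proof (cases "r > 0")
      case True
      then have "indicator {0..} (0 + c * r) * (0 + c * r) powr (a - 1) / exp (0 + c * r)
          = c powr (a - 1) * (indicator {0<..} r * (r powr (a - 1) * exp (- (c * r))))"
        using c by (simp add: powr_mult exp_minus divide_inverse indicator_def)
      then show ?thesis using c by (simp add: ennreal_mult')
    next
      case False
      then have "indicator {0..} (0 + c * r) * (0 + c * r) powr (a - 1) / exp (0 + c * r) = 0"
        using c by (cases "r = 0") (auto simp: indicator_def zero_le_mult_iff)
      moreover have "indicator {0<..} r * (r powr (a - 1) * exp (- (c * r))) = 0"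
        using False by (simp add: indicator_def)
      ultimately show ?thesis by (metis ennreal_0 mult_zero_right)
    qed
  qed
  also have "\<dots> = ennreal (c powr (a - 1)) * ?I"
    by (rule nn_integral_cmult) measurable
  finally have eq: "ennreal (Gamma a) = ennreal (c powr a) * ?I"
    using c by (simp add: mult.assoc[symmetric] ennreal_mult'[symmetric] powr_diff)
  have "ennreal (Gamma a / c powr a) = ennreal (1 / c powr a) * ennreal (Gamma a)"
    using c by (simp add: ennreal_mult'[symmetric])
  also have "\<dots> = ennreal (1 / c powr a * c powr a) * ?I"
    unfolding eq using c by (simp add: mult.assoc[symmetric] ennreal_mult'[symmetric] del: ennreal_mult')
  also have "\<dots> = ?I" using c by simp
  finally show ?thesis by simp
qed

lemma pm1:
  fixes x a :: real
  assumes "x > 0"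
  shows "x powr a = x * x powr (a - 1)"
  using assms by (simp add: powr_diff field_simps)

lemma alg1:
  fixes lam m x s r w :: real
  assumes "x > 0" "s > 0" "r > 0" "w > 0"
  shows "s powr m * r powr (m - 1) * exp (- (s * r)) * (x * r) * (exp (- (x * r * w)) * (x * r * w) powr (lam - 1))
       = x powr lam * w powr (lam - 1) * s powr m * (r powr (lam + m - 1) * exp (- ((x * w + s) * r)))"
proof -
  have e: "exp (- (s * r)) * exp (- (x * r * w)) = exp (- ((x * w + s) * r))"
    by (simp add: exp_add[symmetric] algebra_simps)
  have p1: "(x * r * w) powr (lam - 1) = x powr (lam - 1) * r powr (lam - 1) * w powr (lam - 1)"
    using assms by (simp add: powr_mult)
  have p2: "x powr lam = x * x powr (lam - 1)"
    using assms by (intro pm1) auto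
  have p3: "r powr (lam + m - 1) = r * r powr (lam - 1) * r powr (m - 1)"
  proof -
    have e: "(lam + m - 1) - 1 = (lam - 1) + (m - 1)" by simp
    have "r powr (lam + m - 1) = r * r powr ((lam + m - 1) - 1)" using assms by (intro pm1) auto
    also have "\<dots> = r * (r powr (lam - 1) * r powr (m - 1))" by (simp only: e powr_add)
    finally show ?thesis by (simp add: mult.assoc)
  qed
  show ?thesis unfolding p1 p2 p3 e[symmetric] by (simp add: ac_simps)
qed

lemma alg2:
  fixes lam m x s w :: real
  assumes "x > 0" "s > 0" "w > 0"
  shows "(x * w / (x * w + s)) powr (lam - 1) * (1 - x * w / (x * w + s)) powr (m - 1) * (x * s / (x * w + s)\<^sup>2)
       = x powr lam * w powr (lam - 1) * s powr m / (x * w + s) powr (lam + m)"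
proof -
  define D where "D = x * w + s"
  have D: "D > 0" using assms by (simp add: D_def add_pos_pos)
  have q: "1 - x * w / D = s / D" using D by (simp add: D_def field_simps)
  have p1: "(x * w / D) powr (lam - 1) = x powr (lam - 1) * w powr (lam - 1) / D powr (lam - 1)"
    using assms D by (simp add: powr_divide powr_mult)
  have p2: "(s / D) powr (m - 1) = s powr (m - 1) / D powr (m - 1)"
    using assms D by (simp add: powr_divide)
  have p3: "x powr lam = x * x powr (lam - 1)"
    using assms by (intro pm1) auto
  have p4: "s powr m = s * s powr (m - 1)"
    using assms by (intro pm1) auto
  have p5: "D powr (lam + m) = D powr (lam - 1) * D powr (m - 1) * D\<^sup>2"
  proof -
    have "D powr (lam + m) = D powr ((lam - 1) + (m - 1) + 2)" by simp
    also have "\<dots> = D powr (lam - 1) * D powr (m - 1) * D powr 2" by (simp only: powr_add)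
    also have "D powr 2 = D\<^sup>2" using D by (simp add: powr_numeral)
    finally show ?thesis .
  qed
  have "D powr (lam - 1) > 0" "D powr (m - 1) > 0" using D by auto
  then show ?thesis unfolding D_def[symmetric] q p1 p2 p3 p4 p5 using D
    by (simp add: field_simps)
qed

lemma beta_gamma_ident:
  fixes lam m x s :: real
  assumes lam: "lam > 0" and m: "m > 0" and x: "x > 0" and s: "s > 0"
  shows "(\<integral>\<^sup>+r. ennreal (indicator {0<..} r * inc_gamma lam (x * r) * (s powr m * r powr (m - 1) * exp (- (s * r)))) \<partial>lborel)
       = ennreal (Gamma (lam + m) * inc_beta lam m (x / (x + s)))"
proof -
  define H where "H = (\<lambda>r w. indicator {0<..} r * indicator {0<..<1} w *
     (x powr lam * w powr (lam - 1) * s powr m * (r powr (lam + m - 1) * exp (- ((x * w + s) * r)))))"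
  have Hnn: "H r w \<ge> 0" for r w by (simp add: H_def indicator_def)
  have S1: "ennreal (indicator {0<..} r * inc_gamma lam (x * r) * (s powr m * r powr (m - 1) * exp (- (s * r))))
      = (\<integral>\<^sup>+w. ennreal (H r w) \<partial>lborel)" for r
  proof (cases "r > 0")
    case False
    then have "\<And>w. H r w = 0" by (simp add: H_def)
    then have "(\<integral>\<^sup>+w. ennreal (H r w) \<partial>lborel) = 0" by simp
    moreover have "indicator {0<..} r * inc_gamma lam (x * r) * (s powr m * r powr (m - 1) * exp (- (s * r))) = 0"
      using False by simp
    ultimately show ?thesis by (metis ennreal_0)
  next
    case True
    have xr: "x * r > 0" using x True by simp
    have "ennreal (inc_gamma lam (x * r)) = (\<integral>\<^sup>+v. ennreal (indicator {0<..<x * r} v * (exp (- v) * v powr (lam - 1))) \<partial>lborel)"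
      using inc_gamma_nn(1)[OF lam, of "x * r"] xr by simp
    also have "\<dots> = ennreal (x * r) * (\<integral>\<^sup>+w. ennreal (indicator {0<..<x * r} (0 + (x * r) * w) * (exp (- (0 + (x * r) * w)) * (0 + (x * r) * w) powr (lam - 1))) \<partial>lborel)"
      using xr by (subst nn_integral_real_affine[where c="x * r" and t=0]) auto
    also have "(\<integral>\<^sup>+w. ennreal (indicator {0<..<x * r} (0 + (x * r) * w) * (exp (- (0 + (x * r) * w)) * (0 + (x * r) * w) powr (lam - 1))) \<partial>lborel)
        = (\<integral>\<^sup>+w. ennreal (indicator {0<..<1} w * (exp (- (x * r * w)) * (x * r * w) powr (lam - 1))) \<partial>lborel)"
    proof (intro nn_integral_cong)
      fix w :: real
      have e1: "(0 < x * r * w) = (0 < w)" using zero_less_mult_pos[of "x * r" w] mult_pos_pos[of "x * r" w] xr by blast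
      have e2: "(x * r * w < x * r) = (w < 1)" using mult_less_cancel_left_pos[OF xr, of w 1] by simp
      have "indicator {0<..<x * r} (0 + (x * r) * w) = (indicator {0<..<1} w :: real)"
        by (simp add: indicator_def e1 e2)
      then show "ennreal (indicator {0<..<x * r} (0 + (x * r) * w) * (exp (- (0 + (x * r) * w)) * (0 + (x * r) * w) powr (lam - 1)))
          = ennreal (indicator {0<..<1} w * (exp (- (x * r * w)) * (x * r * w) powr (lam - 1)))" by simp
    qed
    finally have G: "ennreal (inc_gamma lam (x * r)) = ennreal (x * r) * (\<integral>\<^sup>+w. ennreal (indicator {0<..<1} w * (exp (- (x * r * w)) * (x * r * w) powr (lam - 1))) \<partial>lborel)" .
    define h where "h = s powr m * r powr (m - 1) * exp (- (s * r))"
    have h: "h \<ge> 0" by (simp add: h_def)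
    have Gnn: "inc_gamma lam (x * r) \<ge> 0" using inc_gamma_nonneg xr by simp
    have "ennreal (indicator {0<..} r * inc_gamma lam (x * r) * (s powr m * r powr (m - 1) * exp (- (s * r))))
        = ennreal h * ennreal (inc_gamma lam (x * r))"
      using True h Gnn unfolding h_def[symmetric] by (simp add: ennreal_mult'[symmetric] mult.commute)
    also have "\<dots> = ennreal h * (ennreal (x * r) * (\<integral>\<^sup>+w. ennreal (indicator {0<..<1} w * (exp (- (x * r * w)) * (x * r * w) powr (lam - 1))) \<partial>lborel))"
      by (simp only: G)
    also have "\<dots> = ennreal (h * (x * r)) * (\<integral>\<^sup>+w. ennreal (indicator {0<..<1} w * (exp (- (x * r * w)) * (x * r * w) powr (lam - 1))) \<partial>lborel)"
      using h xr by (simp only: ennreal_mult' mult.assoc)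
    also have "\<dots> = (\<integral>\<^sup>+w. ennreal (h * (x * r)) * ennreal (indicator {0<..<1} w * (exp (- (x * r * w)) * (x * r * w) powr (lam - 1))) \<partial>lborel)"
      by (rule nn_integral_cmult[symmetric]) measurable
    also have "\<dots> = (\<integral>\<^sup>+w. ennreal (H r w) \<partial>lborel)"
    proof (intro nn_integral_cong)
      fix w :: real
      show "ennreal (h * (x * r)) * ennreal (indicator {0<..<1} w * (exp (- (x * r * w)) * (x * r * w) powr (lam - 1))) = ennreal (H r w)"
      proof (cases "0 < w \<and> w < 1")
        case True
        then have "h * (x * r) * (indicator {0<..<1} w * (exp (- (x * r * w)) * (x * r * w) powr (lam - 1))) = H r w"
          using alg1[where lam=lam and m=m and x=x and s=s and r=r and w=w] x s \<open>r > 0\<close> by (simp add: H_def h_def indicator_def)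
        then show ?thesis using h xr by (simp add: ennreal_mult'[symmetric])
      next
        case False
        then have "H r w = 0" "indicator {0<..<1} w * (exp (- (x * r * w)) * (x * r * w) powr (lam - 1)) = 0"
          by (auto simp: H_def indicator_def)
        then show ?thesis by (metis ennreal_0 mult_zero_right)
      qed
    qed
    finally show ?thesis .
  qed
  have Hm: "(\<lambda>(r, w). ennreal (H r w)) \<in> borel_measurable (lborel \<Otimes>\<^sub>M lborel)"
    unfolding H_def by measurable
  have S2: "(\<integral>\<^sup>+r. (\<integral>\<^sup>+w. ennreal (H r w) \<partial>lborel) \<partial>lborel) = (\<integral>\<^sup>+w. (\<integral>\<^sup>+r. ennreal (H r w) \<partial>lborel) \<partial>lborel)"
    using lborel_pair.Fubini'[OF Hm] by simp
  define Q where "Q = (\<lambda>w. x powr lam * w powr (lam - 1) * s powr m * (Gamma (lam + m) / (x * w + s) powr (lam + m)))"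
  have S3: "(\<integral>\<^sup>+r. ennreal (H r w) \<partial>lborel) = ennreal (indicator {0<..<1} w * Q w)" for w
  proof (cases "0 < w \<and> w < 1")
    case False
    then have z: "\<And>r. H r w = 0" and z2: "indicator {0<..<1} w * Q w = 0" by (auto simp: H_def indicator_def)
    have a: "(\<integral>\<^sup>+r. ennreal (H r w) \<partial>lborel) = 0" using z by simp
    have b: "ennreal (indicator {0<..<1} w * Q w) = 0" by (simp only: z2 ennreal_0)
    show ?thesis by (simp only: a b)
  next
    case True
    define C where "C = x powr lam * w powr (lam - 1) * s powr m"
    have C: "C \<ge> 0" by (simp add: C_def)
    have c: "x * w + s > 0" using True x s by (simp add: add_pos_pos)
    have "(\<integral>\<^sup>+r. ennreal (H r w) \<partial>lborel) = (\<integral>\<^sup>+r. ennreal C * ennreal (indicator {0<..} r * (r powr (lam + m - 1) * exp (- ((x * w + s) * r)))) \<partial>lborel)"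
    proof (intro nn_integral_cong)
      fix r :: real
      show "ennreal (H r w) = ennreal C * ennreal (indicator {0<..} r * (r powr (lam + m - 1) * exp (- ((x * w + s) * r))))"
        using True C by (simp add: H_def C_def ennreal_mult'[symmetric] indicator_def)
    qed
    also have "\<dots> = ennreal C * (\<integral>\<^sup>+r. ennreal (indicator {0<..} r * (r powr (lam + m - 1) * exp (- ((x * w + s) * r)))) \<partial>lborel)"
      by (rule nn_integral_cmult) measurable
    also have "\<dots> = ennreal C * ennreal (Gamma (lam + m) / (x * w + s) powr (lam + m))"
      using gamma_scaled[of "lam + m" "x * w + s"] lam m c by simp
    also have "\<dots> = ennreal (indicator {0<..<1} w * Q w)"
      using True C c by (simp add: Q_def C_def ennreal_mult'[symmetric] indicator_def)
    finally show ?thesis .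
  qed
  define g where "g = (\<lambda>w. x * w / (x * w + s))"
  define g' where "g' = (\<lambda>w. x * s / (x * w + s)\<^sup>2)"
  define \<beta> where "\<beta> = (\<lambda>u. u powr (lam - 1) * (1 - u) powr (m - 1))"
  have pos: "x * w + s > 0" if "w \<in> {0..1}" for w using that x s by (intro add_nonneg_pos) auto
  have dg: "(g has_real_derivative g' w) (at w)" if "w \<in> {0..1}" for w
    unfolding g_def g'_def using pos[OF that]
    by (auto intro!: derivative_eq_intros simp: field_simps power2_eq_square)
  have cg': "continuous_on {0..1} g'"
    unfolding g'_def using pos by (intro continuous_intros) (auto dest!: pos simp del: atLeastAtMost_iff)
  have g'nn: "g' w \<ge> 0" if "w \<in> {0..1}" for w unfolding g'_def using x s by simp
  have g0: "g 0 = 0" and g1: "g 1 = x / (x + s)" by (simp_all add: g_def)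
  have sm: "set_borel_measurable borel {g 0..g 1} \<beta>"
    unfolding set_borel_measurable_def \<beta>_def by measurable
  have sub: "(\<integral>\<^sup>+u. ennreal (\<beta> u * indicator {g 0..g 1} u) \<partial>lborel) = (\<integral>\<^sup>+w. ennreal (\<beta> (g w) * g' w * indicator {0..1} w) \<partial>lborel)"
    by (rule nn_integral_substitution[OF sm dg cg' g'nn]) auto
  have AE01: "AE w in lborel. w \<noteq> 0 \<and> w \<noteq> 1"
    by (simp add: AE_conj_iff AE_lborel_singleton)
  have AEu: "AE u in lborel. u \<noteq> 0 \<and> u \<noteq> x / (x + s)"
    by (simp add: AE_conj_iff AE_lborel_singleton)
  have "ennreal (Gamma (lam + m) * inc_beta lam m (x / (x + s)))
      = ennreal (Gamma (lam + m)) * (\<integral>\<^sup>+u. ennreal (indicator {0<..<x / (x + s)} u * \<beta> u) \<partial>lborel)"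
  proof -
    have u: "0 \<le> x / (x + s)" "x / (x + s) \<le> 1" using x s by auto
    have "Gamma (lam + m) \<ge> 0" using lam m by (simp add: Gamma_real_pos less_imp_le)
    then show ?thesis using inc_beta_nn(1)[OF lam m u] inc_beta_nonneg[OF lam m u]
      by (simp add: ennreal_mult' \<beta>_def)
  qed
  also have "(\<integral>\<^sup>+u. ennreal (indicator {0<..<x / (x + s)} u * \<beta> u) \<partial>lborel) = (\<integral>\<^sup>+u. ennreal (\<beta> u * indicator {g 0..g 1} u) \<partial>lborel)"
    using AEu by (intro nn_integral_cong_AE) (auto simp: g0 g1 indicator_def)
  also note sub
  also have "(\<integral>\<^sup>+w. ennreal (\<beta> (g w) * g' w * indicator {0..1} w) \<partial>lborel)
      = (\<integral>\<^sup>+w. ennreal (indicator {0<..<1} w * (x powr lam * w powr (lam - 1) * s powr m / (x * w + s) powr (lam + m))) \<partial>lborel)"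
  proof (intro nn_integral_cong_AE)
    show "AE w in lborel. ennreal (\<beta> (g w) * g' w * indicator {0..1} w)
        = ennreal (indicator {0<..<1} w * (x powr lam * w powr (lam - 1) * s powr m / (x * w + s) powr (lam + m)))"
      using AE01
    proof eventually_elim
      case (elim w)
      show ?case
      proof (cases "0 < w \<and> w < 1")
        case True
        then show ?thesis using alg2[where lam=lam and m=m and x=x and s=s and w=w] x s by (simp add: \<beta>_def g_def g'_def indicator_def)
      next
        case False
        with elim have "w \<notin> {0..1}" by auto
        then have i1: "indicator {0..1} w = (0::real)" by simp
        have i2: "indicator {0<..<1} w = (0::real)" using False by simp
        show ?thesis by (simp only: i1 i2 mult_zero_right mult_zero_left)
      qed
    qed
  qed
  also have "ennreal (Gamma (lam + m)) * \<dots> = (\<integral>\<^sup>+w. ennreal (Gamma (lam + m)) * ennreal (indicator {0<..<1} w * (x powr lam * w powr (lam - 1) * s powr m / (x * w + s) powr (lam + m))) \<partial>lborel)"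
    by (rule nn_integral_cmult[symmetric]) measurable
  also have "\<dots> = (\<integral>\<^sup>+w. ennreal (indicator {0<..<1} w * Q w) \<partial>lborel)"
  proof (intro nn_integral_cong)
    fix w :: real
    have "Gamma (lam + m) \<ge> 0" using lam m by (simp add: Gamma_real_pos less_imp_le)
    then show "ennreal (Gamma (lam + m)) * ennreal (indicator {0<..<1} w * (x powr lam * w powr (lam - 1) * s powr m / (x * w + s) powr (lam + m))) = ennreal (indicator {0<..<1} w * Q w)"
      by (simp add: ennreal_mult'[symmetric] Q_def indicator_def)
  qed
  also have "\<dots> = (\<integral>\<^sup>+w. (\<integral>\<^sup>+r. ennreal (H r w) \<partial>lborel) \<partial>lborel)"
    by (simp add: S3)
  also have "\<dots> = (\<integral>\<^sup>+r. (\<integral>\<^sup>+w. ennreal (H r w) \<partial>lborel) \<partial>lborel)"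
    by (rule S2[symmetric])
  also have "\<dots> = (\<integral>\<^sup>+r. ennreal (indicator {0<..} r * inc_gamma lam (x * r) * (s powr m * r powr (m - 1) * exp (- (s * r)))) \<partial>lborel)"
    by (simp add: S1)
  finally show ?thesis by simp
qed

lemma powr_nn:
  assumes lam: "lam > 0" and u: "u \<ge> 0"
  shows "(\<integral>\<^sup>+v. ennreal (indicator {0<..<u} v * v powr (lam - 1)) \<partial>lborel) = ennreal (u powr lam / lam)"
proof -
  have "(\<integral>\<^sup>+v. ennreal (indicator {0<..<u} v * v powr (lam - 1)) \<partial>lborel)
      = (\<integral>\<^sup>+v. ennreal (v powr (lam - 1)) * indicator {0..u} v \<partial>lborel)"
  proof (intro nn_integral_cong_AE)
    show "AE v in lborel. ennreal (indicator {0<..<u} v * v powr (lam - 1)) = ennreal (v powr (lam - 1)) * indicator {0..u} v"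
      using AE_lborel_singleton[of u]
    proof eventually_elim
      case (elim v)
      then show ?case by (cases "v = 0") (auto simp: indicator_def)
    qed
  qed
  also have "\<dots> = ennreal (u powr (lam - 1 + 1) / (lam - 1 + 1))"
    by (rule nn_integral_has_integral_lebesgue'[OF _ has_integral_powr_from_0]) (use lam u in auto)
  finally show ?thesis by simp
qed

lemma inc_gamma_lower:
  assumes lam: "lam > 0" and y: "y > 0"
  shows "inc_gamma lam y \<ge> exp (- 1) * ((min y 1) powr lam / lam)"
proof -
  have "ennreal (exp (- 1) * ((min y 1) powr lam / lam)) = ennreal (exp (- 1)) * ennreal ((min y 1) powr lam / lam)"
    by (rule ennreal_mult') simp
  also have "\<dots> = ennreal (exp (- 1)) * (\<integral>\<^sup>+v. ennreal (indicator {0<..<min y 1} v * v powr (lam - 1)) \<partial>lborel)"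
    using powr_nn[OF lam, of "min y 1"] y by simp
  also have "\<dots> = (\<integral>\<^sup>+v. ennreal (exp (- 1)) * ennreal (indicator {0<..<min y 1} v * v powr (lam - 1)) \<partial>lborel)"
    by (rule nn_integral_cmult[symmetric]) measurable
  also have "\<dots> \<le> (\<integral>\<^sup>+v. ennreal (indicator {0<..<y} v * (exp (- v) * v powr (lam - 1))) \<partial>lborel)"
  proof (intro nn_integral_mono)
    fix v :: real
    show "ennreal (exp (- 1)) * ennreal (indicator {0<..<min y 1} v * v powr (lam - 1)) \<le> ennreal (indicator {0<..<y} v * (exp (- v) * v powr (lam - 1)))"
    proof (cases "0 < v \<and> v < min y 1")
      case True
      then have "exp (- 1) * v powr (lam - 1) \<le> exp (- v) * v powr (lam - 1)"
        by (intro mult_right_mono) auto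
      then show ?thesis using True by (simp add: ennreal_mult'[symmetric] indicator_def)
    next
      case False
      then have "indicator {0<..<min y 1} v * v powr (lam - 1) = 0" by (simp add: indicator_def)
      then have "ennreal (exp (- 1)) * ennreal (indicator {0<..<min y 1} v * v powr (lam - 1)) = 0" by (simp only: ennreal_0 mult_zero_right)
      then show ?thesis by (simp only: zero_le)
    qed
  qed
  also have "\<dots> = ennreal (inc_gamma lam y)" using inc_gamma_nn(1)[OF lam, of y] y by simp
  finally show ?thesis using inc_gamma_nonneg[of y lam] y by (simp add: ennreal_le_iff)
qed

lemma inc_beta_upper:
  assumes lam: "lam > 0" and m: "m \<ge> 1" and u: "0 \<le> u" "u \<le> 1"
  shows "inc_beta lam m u \<le> u powr lam / lam" and "inc_beta lam m u \<le> Beta lam m"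
proof -
  have m0: "m > 0" using m by simp
  have "ennreal (inc_beta lam m u) \<le> (\<integral>\<^sup>+v. ennreal (indicator {0<..<u} v * v powr (lam - 1)) \<partial>lborel)"
    unfolding inc_beta_nn(1)[OF lam m0 u]
  proof (intro nn_integral_mono ennreal_leI)
    fix v :: real
    show "indicator {0<..<u} v * (v powr (lam - 1) * (1 - v) powr (m - 1)) \<le> indicator {0<..<u} v * v powr (lam - 1)"
    proof (cases "0 < v \<and> v < u")
      case True
      then have "(1 - v) powr (m - 1) \<le> 1" using u m by (intro powr_le1) auto
      then have "v powr (lam - 1) * (1 - v) powr (m - 1) \<le> v powr (lam - 1) * 1"
        by (intro mult_left_mono) auto
      then show ?thesis using True by (simp add: indicator_def)
    next
      case False
      then have "indicator {0<..<u} v = (0::real)" by simp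
      then show ?thesis by simp
    qed
  qed
  also have "\<dots> = ennreal (u powr lam / lam)" by (rule powr_nn[OF lam u(1)])
  finally show "inc_beta lam m u \<le> u powr lam / lam"
    using inc_beta_nonneg[OF lam m0 u] lam by (simp add: ennreal_le_iff)
  have "ennreal (inc_beta lam m u) \<le> ennreal (Beta lam m)"
    using inc_beta_nn[OF lam m0 u] by simp
  moreover have "Beta lam m \<ge> 0" using lam m0 by (simp add: Beta_def less_imp_le)
  ultimately show "inc_beta lam m u \<le> Beta lam m" by (simp add: ennreal_le_iff)
qed

lemma gamma_ratio_lim:
  assumes lam: "lam > 0"
  shows "(\<lambda>n. Gamma (lam + real n) / (Gamma (real n) * real n powr lam)) \<longlonglongrightarrow> 1"
proof -
  have ni: "lam \<notin> \<int>\<^sub>\<le>\<^sub>0" using lam by (auto elim!: nonpos_Ints_cases)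
  have "Gamma lam > 0" using lam by (rule Gamma_real_pos)
  then have G0: "Gamma lam \<noteq> 0" by simp
  have lim: "(\<lambda>n. Gamma lam / Gamma_series' lam n) \<longlonglongrightarrow> Gamma lam / Gamma lam"
    by (intro tendsto_divide tendsto_const Gamma_series'_LIMSEQ G0)
  have ev: "eventually (\<lambda>n. Gamma lam / Gamma_series' lam n = Gamma (lam + real n) / (Gamma (real n) * real n powr lam)) sequentially"
    using eventually_gt_at_top[of "0::nat"]
  proof eventually_elim
    case (elim n)
    have f: "fact (n - 1) = Gamma (real n)"
      using Gamma_fact[of "n - 1", where 'a = real] elim by (simp add: of_nat_diff)
    have p: "pochhammer lam n = Gamma (lam + real n) / Gamma lam"
      using pochhammer_Gamma[OF ni, of n] by simp
    have e: "exp (lam * ln (real n)) = real n powr lam"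
      using elim by (simp add: powr_def)
    have "Gamma (real n) > 0" "Gamma (lam + real n) > 0" "real n powr lam > 0" using elim lam by auto
    then show ?case
      unfolding Gamma_series'_def f p using e G0 by (simp add: field_simps)
  qed
  show ?thesis using Lim_transform_eventually[OF lim ev] G0 by simp
qed

lemma beta_dom:
  assumes lam: "lam > 0"
  shows "\<exists>C>0. \<forall>n y. n \<ge> 1 \<longrightarrow> y > 0 \<longrightarrow>
     Gamma (lam + real n) / Gamma (real n) * inc_beta lam (real n) (y / (y + real n)) \<le> C * inc_gamma lam y"
proof -
  have "convergent (\<lambda>n. Gamma (lam + real n) / (Gamma (real n) * real n powr lam))"
    using gamma_ratio_lim[OF lam] by (auto simp: convergent_def)
  then have "Bseq (\<lambda>n. Gamma (lam + real n) / (Gamma (real n) * real n powr lam))"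
    by (rule convergent_imp_Bseq)
  then obtain Q where Q: "Q > 0" "\<And>n. norm (Gamma (lam + real n) / (Gamma (real n) * real n powr lam)) \<le> Q"
    by (auto elim!: BseqE)
  define C where "C = max (Q * exp 1) (Gamma lam * lam * exp 1)"
  have Cpos: "C > 0" using Q by (simp add: C_def max.strict_coboundedI1)
  have "n \<ge> 1 \<longrightarrow> y > 0 \<longrightarrow>
     Gamma (lam + real n) / Gamma (real n) * inc_beta lam (real n) (y / (y + real n)) \<le> C * inc_gamma lam y" for n y
  proof (intro impI)
    assume n: "n \<ge> 1" and y: "y > 0"
    define m where "m = real n"
    have m: "m \<ge> 1" using n by (simp add: m_def)
    define u where "u = y / (y + m)"
    have u: "0 \<le> u" "u \<le> 1" using y m by (auto simp: u_def)
    define R where "R = Gamma (lam + m) / Gamma m"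
    have Rpos: "R > 0" using lam m by (simp add: R_def)
    have Ga: "Gamma lam > 0" using lam by (rule Gamma_real_pos)
    have Gm: "Gamma m > 0" using m by simp
    have Glm: "Gamma (lam + m) > 0" using m lam by simp
    have mp: "m powr lam > 0" using m by simp
    have rq: "R / m powr lam \<le> Q"
      using Q(2)[of n] Glm Gm mp by (simp add: R_def m_def divide_divide_eq_left abs_mult)
    have ib: "inc_beta lam m u \<ge> 0" using inc_beta_nonneg[OF lam _ u] m by simp
    have ig: "inc_gamma lam y \<ge> exp (- 1) * ((min y 1) powr lam / lam)" by (rule inc_gamma_lower[OF lam y])
    have b1: "R * inc_beta lam m u \<le> Q * (y powr lam / lam)"
    proof -
      have "R * inc_beta lam m u \<le> R * (u powr lam / lam)"
        using inc_beta_upper(1)[OF lam m u] Rpos by (intro mult_left_mono) auto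
      also have "u powr lam \<le> (y / m) powr lam"
        using y m u lam by (intro powr_mono2) (auto simp: u_def intro!: divide_left_mono)
      then have "R * (u powr lam / lam) \<le> R * ((y / m) powr lam / lam)"
        using Rpos lam by (intro mult_left_mono divide_right_mono) auto
      also have "\<dots> = (R / m powr lam) * (y powr lam / lam)"
        using y m by (simp add: powr_divide)
      also have "\<dots> \<le> Q * (y powr lam / lam)"
        using rq lam by (intro mult_right_mono) auto
      finally show ?thesis .
    qed
    have b2: "R * inc_beta lam m u \<le> Gamma lam"
    proof -
      have "R * inc_beta lam m u \<le> R * Beta lam m"
        using inc_beta_upper(2)[OF lam m u] Rpos by (intro mult_left_mono) auto
      also have "\<dots> = Gamma lam" using Gm Glm by (simp add: R_def Beta_def)
      finally show ?thesis .
    qed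
    have "R * inc_beta lam m u \<le> C * inc_gamma lam y"
    proof (cases "y \<le> 1")
      case True
      then have ig': "inc_gamma lam y \<ge> exp (- 1) * (y powr lam / lam)" using ig by simp
      have "R * inc_beta lam m u \<le> Q * (y powr lam / lam)" by (rule b1)
      also have "\<dots> = (Q * exp 1) * (exp (- 1) * (y powr lam / lam))" by (simp add: exp_minus)
      also have "\<dots> \<le> C * inc_gamma lam y"
        using ig' Q Cpos lam by (intro mult_mono) (auto simp: C_def)
      finally show ?thesis .
    next
      case False
      then have ig': "inc_gamma lam y \<ge> exp (- 1) * (1 / lam)" using ig by simp
      have "R * inc_beta lam m u \<le> Gamma lam" by (rule b2)
      also have "\<dots> = (Gamma lam * lam * exp 1) * (exp (- 1) * (1 / lam))" using lam by (simp add: exp_minus)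
      also have "\<dots> \<le> C * inc_gamma lam y"
        using ig' Ga lam Cpos by (intro mult_mono) (auto simp: C_def)
      finally show ?thesis .
    qed
    then show "Gamma (lam + real n) / Gamma (real n) * inc_beta lam (real n) (y / (y + real n)) \<le> C * inc_gamma lam y"
      by (simp add: R_def u_def m_def)
  qed
  then show ?thesis using Cpos by blast
qed

lemma beta_lim:
  assumes lam: "lam > 0" and y: "y > 0"
  shows "(\<lambda>n. Gamma (lam + real n) / Gamma (real n) * inc_beta lam (real n) (y / (y + real n))) \<longlonglongrightarrow> inc_gamma lam y"
proof -
  define j where "j = (\<lambda>n v. indicator {0<..<real n * y / (y + real n)} v * (v powr (lam - 1) * (1 - v / real n) powr (real n - 1)))"
  define jl where "jl = (\<lambda>v. indicator {0<..<y} v * (exp (- v) * v powr (lam - 1)))"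
  define w where "w = (\<lambda>v. indicator {0<..<y} v * v powr (lam - 1))"
  have jm: "j n \<in> borel_measurable lborel" for n unfolding j_def by measurable
  have jlm: "jl \<in> borel_measurable lborel" unfolding jl_def by measurable
  have wm: "w \<in> borel_measurable lborel" unfolding w_def by measurable
  have wfin: "(\<integral>\<^sup>+v. ennreal (w v) \<partial>lborel) < \<infinity>"
    unfolding w_def using powr_nn[OF lam, of y] y by simp
  have wi: "integrable lborel w"
    using nn_fin_integrable(1)[OF wm _ wfin] by (simp add: w_def indicator_def)
  have ylt: "real n * y / (y + real n) < y" if "n \<ge> 1" for n
    using that y by (simp add: field_simps)
  have bound: "norm (j n v) \<le> w v" if "n \<ge> 1" for n v
  proof (cases "0 < v \<and> v < real n * y / (y + real n)")
    case True
    have vn: "v < real n"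
    proof -
      have "real n * y / (y + real n) < real n" using that y by (simp add: field_simps)
      then show ?thesis using True by simp
    qed
    have "(1 - v / real n) powr (real n - 1) \<le> 1" using True vn that by (intro powr_le1) auto
    then have "v powr (lam - 1) * (1 - v / real n) powr (real n - 1) \<le> v powr (lam - 1) * 1"
      by (intro mult_left_mono) auto
    then show ?thesis using True ylt[OF that] by (simp add: j_def w_def indicator_def)
  next
    case False
    then have "j n v = 0" by (simp add: j_def indicator_def)
    then show ?thesis by (simp add: w_def indicator_def)
  qed
  have lim_pt: "(\<lambda>n. j (n + 1) v) \<longlonglongrightarrow> jl v" for v
  proof (cases "0 < v \<and> v < y")
    case False
    then have "j (n + 1) v = 0" for n
    proof (cases "v \<le> 0")
      case False
      with \<open>\<not> (0 < v \<and> v < y)\<close> have "v \<ge> y" by auto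
      then show ?thesis using ylt[of "n + 1"] by (auto simp: j_def indicator_def)
    qed (auto simp: j_def indicator_def)
    moreover have "jl v = 0" using False by (simp add: jl_def indicator_def)
    ultimately show ?thesis by simp
  next
    case True
    have l1: "(\<lambda>n. real n * y / (y + real n)) \<longlonglongrightarrow> y"
    proof -
      have "(\<lambda>n. y / (y * inverse (real n) + 1)) \<longlonglongrightarrow> y / (y * 0 + 1)"
        by (intro tendsto_intros tendsto_inverse_0_at_top filterlim_real_sequentially) simp
      moreover have "eventually (\<lambda>n. y / (y * inverse (real n) + 1) = real n * y / (y + real n)) sequentially"
        using eventually_gt_at_top[of "0::nat"] by eventually_elim (use y in \<open>simp add: field_simps\<close>)
      ultimately show ?thesis by (simp add: tendsto_cong)
    qed
    have ev1: "eventually (\<lambda>n. v < real n * y / (y + real n)) sequentially"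
      using order_tendstoD(1)[OF l1] True by simp
    have l2: "(\<lambda>n. (1 - v / real n) powr (real n - 1)) \<longlonglongrightarrow> exp (- v)"
    proof -
      have "(\<lambda>n. (1 + (- v) / real n) ^ n / (1 - v * inverse (real n))) \<longlonglongrightarrow> exp (- v) / (1 - v * 0)"
        by (intro tendsto_intros tendsto_exp_limit_sequentially tendsto_inverse_0_at_top filterlim_real_sequentially) simp
      moreover have "eventually (\<lambda>n. (1 + (- v) / real n) ^ n / (1 - v * inverse (real n)) = (1 - v / real n) powr (real n - 1)) sequentially"
      proof -
        obtain N :: nat where N: "real N > v" using reals_Archimedean2 by blast
        show ?thesis
        proof (rule eventually_sequentiallyI[of "N + 1"])
          fix n assume "N + 1 \<le> n"
          then have nv: "real n > v" "real n > 0" using N True by linarith+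
          then have b: "1 - v / real n > 0" by (simp add: field_simps)
          have "(1 - v / real n) powr (real n - 1) = (1 - v / real n) powr (real n) / (1 - v / real n)"
            using b by (simp add: powr_diff)
          also have "\<dots> = (1 - v / real n) ^ n / (1 - v / real n)"
            using b by (simp add: powr_realpow)
          finally show "(1 + (- v) / real n) ^ n / (1 - v * inverse (real n)) = (1 - v / real n) powr (real n - 1)"
            by (simp add: divide_inverse)
        qed
      qed
      ultimately show ?thesis by (simp add: tendsto_cong)
    qed
    have "(\<lambda>n. indicator {0<..<y} v * (v powr (lam - 1) * (1 - v / real n) powr (real n - 1))) \<longlonglongrightarrow> jl v"
    proof -
      have "(\<lambda>n. v powr (lam - 1) * (1 - v / real n) powr (real n - 1)) \<longlonglongrightarrow> v powr (lam - 1) * exp (- v)"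
        by (rule tendsto_mult_left[OF l2])
      then show ?thesis unfolding jl_def using True by (simp add: indicator_def mult.commute)
    qed
    moreover have "eventually (\<lambda>n. indicator {0<..<y} v * (v powr (lam - 1) * (1 - v / real n) powr (real n - 1)) = j n v) sequentially"
      using ev1 by eventually_elim (use True in \<open>simp add: j_def indicator_def\<close>)
    ultimately have "(\<lambda>n. j n v) \<longlonglongrightarrow> jl v" by (simp add: tendsto_cong)
    then show ?thesis by (rule LIMSEQ_ignore_initial_segment)
  qed
  have dc: "(\<lambda>n. integral\<^sup>L lborel (j (n + 1))) \<longlonglongrightarrow> integral\<^sup>L lborel jl"
  proof (rule integral_dominated_convergence[OF jlm _ wi])
    show "\<And>n. j (n + 1) \<in> borel_measurable lborel" by (rule jm)
    show "AE x in lborel. (\<lambda>n. j (n + 1) x) \<longlonglongrightarrow> jl x" using lim_pt by (intro AE_I2)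
    show "\<And>n. AE x in lborel. norm (j (n + 1) x) \<le> w x" using bound by (intro AE_I2) simp
  qed
  have ji: "integrable lborel (j (n + 1))" for n
  proof (rule integrable_dominated_convergence2[where s="\<lambda>k. j (k + 1)" and i=n, OF jlm _ wi])
    show "\<And>n. j (n + 1) \<in> borel_measurable lborel" by (rule jm)
    show "AE x in lborel. (\<lambda>n. j (n + 1) x) \<longlonglongrightarrow> jl x" using lim_pt by (intro AE_I2)
    show "\<And>n. AE x in lborel. norm (j (n + 1) x) \<le> w x" using bound by (intro AE_I2) simp
  qed
  have ig: "inc_gamma lam y = integral\<^sup>L lborel jl"
    unfolding inc_gamma_def jl_def using y
    by (subst interval_integral_Ioo) (auto simp: set_lebesgue_integral_def)
  have J: "inc_beta lam (real n) (y / (y + real n)) = real n powr (- lam) * integral\<^sup>L lborel (j n)"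
    if n: "n \<ge> 1" and jin: "integrable lborel (j n)" for n
  proof -
    define m where "m = real n"
    have m: "m > 0" "m \<ge> 1" using n by (auto simp: m_def)
    define U where "U = y / (y + m)"
    have U: "0 \<le> U" "U \<le> 1" using y m by (auto simp: U_def)
    have jnn: "j n v \<ge> 0" for v unfolding j_def by (simp add: indicator_def)
    have "ennreal (inc_beta lam m U) = (\<integral>\<^sup>+u. ennreal (indicator {0<..<U} u * (u powr (lam - 1) * (1 - u) powr (m - 1))) \<partial>lborel)"
      by (rule inc_beta_nn(1)[OF lam m(1) U])
    also have "\<dots> = ennreal \<bar>1 / m\<bar> * (\<integral>\<^sup>+v. ennreal (indicator {0<..<U} (0 + (1 / m) * v) * ((0 + (1 / m) * v) powr (lam - 1) * (1 - (0 + (1 / m) * v)) powr (m - 1))) \<partial>lborel)"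
      using m by (subst nn_integral_real_affine[where c="1 / m" and t=0]) auto
    also have "\<dots> = (\<integral>\<^sup>+v. ennreal (1 / m) * ennreal (indicator {0<..<U} (0 + (1 / m) * v) * ((0 + (1 / m) * v) powr (lam - 1) * (1 - (0 + (1 / m) * v)) powr (m - 1))) \<partial>lborel)"
      using m by (subst nn_integral_cmult) (auto)
    also have "\<dots> = (\<integral>\<^sup>+v. ennreal (m powr (- lam)) * ennreal (j n v) \<partial>lborel)"
    proof (intro nn_integral_cong)
      fix v :: real
      show "ennreal (1 / m) * ennreal (indicator {0<..<U} (0 + (1 / m) * v) * ((0 + (1 / m) * v) powr (lam - 1) * (1 - (0 + (1 / m) * v)) powr (m - 1))) = ennreal (m powr (- lam)) * ennreal (j n v)"
      proof (cases "0 < v \<and> v < m * U")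
        case True
        have i1: "indicator {0<..<U} (0 + (1 / m) * v) = (1::real)" using True m by (auto simp: field_simps indicator_def)
        have i2: "indicator {0<..<real n * y / (y + real n)} v = (1::real)" using True by (simp add: U_def m_def indicator_def)
        have key0: "1 / m * ((1 / m * v) powr (lam - 1)) = m powr (- lam) * v powr (lam - 1)"
        proof -
          have "(1 / m * v) powr (lam - 1) = v powr (lam - 1) / m powr (lam - 1)"
            using m True by (simp add: powr_divide)
          moreover have "m powr (- lam) = 1 / (m * m powr (lam - 1))"
            using pm1[OF m(1), of lam] by (simp add: powr_minus divide_inverse)
          ultimately show ?thesis by simp
        qed
        have "1 / m * (indicator {0<..<U} (0 + (1 / m) * v) * ((0 + (1 / m) * v) powr (lam - 1) * (1 - (0 + (1 / m) * v)) powr (m - 1)))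
            = (1 / m * ((1 / m * v) powr (lam - 1))) * (1 - v / m) powr (m - 1)"
          unfolding i1 by (simp add: mult.assoc)
        also have "\<dots> = m powr (- lam) * (v powr (lam - 1) * (1 - v / m) powr (m - 1))"
          unfolding key0 by (simp add: mult.assoc)
        also have "\<dots> = m powr (- lam) * j n v"
          unfolding j_def i2 by (simp add: m_def)
        finally have "1 / m * (indicator {0<..<U} (0 + (1 / m) * v) * ((0 + (1 / m) * v) powr (lam - 1) * (1 - (0 + (1 / m) * v)) powr (m - 1))) = m powr (- lam) * j n v" .
        then show ?thesis using m by (simp add: ennreal_mult'[symmetric])
      next
        case False
        have i1: "indicator {0<..<U} (0 + (1 / m) * v) = (0::real)" using False m by (auto simp: field_simps indicator_def)
        have i2: "j n v = 0" using False by (simp add: j_def U_def m_def indicator_def)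
        show ?thesis by (simp only: i1 i2 mult_zero_left mult_zero_right ennreal_0)
      qed
    qed
    also have "\<dots> = ennreal (m powr (- lam)) * (\<integral>\<^sup>+v. ennreal (j n v) \<partial>lborel)"
      by (rule nn_integral_cmult) (use jm in auto)
    also have "(\<integral>\<^sup>+v. ennreal (j n v) \<partial>lborel) = ennreal (integral\<^sup>L lborel (j n))"
      by (rule nn_integral_eq_integral[OF jin]) (simp add: jnn)
    finally have "ennreal (inc_beta lam m U) = ennreal (m powr (- lam) * integral\<^sup>L lborel (j n))"
      by (simp add: ennreal_mult')
    moreover have "inc_beta lam m U \<ge> 0" by (rule inc_beta_nonneg[OF lam m(1) U])
    moreover have "integral\<^sup>L lborel (j n) \<ge> 0" by (simp add: jnn)
    ultimately show ?thesis by (simp add: U_def m_def)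
  qed
  have "(\<lambda>n. Gamma (lam + real (n + 1)) / (Gamma (real (n + 1)) * real (n + 1) powr lam) * integral\<^sup>L lborel (j (n + 1))) \<longlonglongrightarrow> 1 * inc_gamma lam y"
    unfolding ig by (intro tendsto_mult dc LIMSEQ_ignore_initial_segment gamma_ratio_lim lam)
  moreover have "Gamma (lam + real (n + 1)) / (Gamma (real (n + 1)) * real (n + 1) powr lam) * integral\<^sup>L lborel (j (n + 1))
      = Gamma (lam + real (n + 1)) / Gamma (real (n + 1)) * inc_beta lam (real (n + 1)) (y / (y + real (n + 1)))" for n
    using J[of "n + 1", OF _ ji[of n]] by (simp add: powr_minus divide_inverse)
  ultimately have "(\<lambda>n. Gamma (lam + real (n + 1)) / Gamma (real (n + 1)) * inc_beta lam (real (n + 1)) (y / (y + real (n + 1)))) \<longlonglongrightarrow> inc_gamma lam y"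
    by simp
  then show ?thesis by (rule LIMSEQ_offset)
qed

lemma pow_exp_bound:
  fixes y r :: real and k :: nat
  assumes y: "y \<ge> 0" and r: "r > 0"
  shows "y ^ k * exp (- (r * y)) \<le> (real k / r) ^ k"
proof (cases "k = 0")
  case True
  then show ?thesis using r y by simp
next
  case False
  then have k: "real k > 0" by simp
  have "r * y / real k \<le> exp (r * y / real k)"
    using exp_ge_add_one_self[of "r * y / real k"] by linarith
  then have "(r * y / real k) ^ k \<le> exp (r * y / real k) ^ k"
    using r y k by (intro power_mono) auto
  also have "\<dots> = exp (r * y)"
    using k by (simp add: exp_of_nat_mult[symmetric])
  finally have "(r / real k) ^ k * y ^ k \<le> exp (r * y)"
    by (simp add: power_mult_distrib power_divide field_simps)
  then have "y ^ k \<le> exp (r * y) * (real k / r) ^ k"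
    using r k by (simp add: field_simps power_divide)
  then have "y ^ k * exp (- (r * y)) \<le> exp (r * y) * (real k / r) ^ k * exp (- (r * y))"
    by (intro mult_right_mono) auto
  also have "\<dots> = (real k / r) ^ k" by (simp add: exp_minus field_simps)
  finally show ?thesis .
qed

lemma exp_sub_one_bound:
  fixes z :: real
  shows "\<bar>exp z - 1\<bar> \<le> \<bar>z\<bar> * exp \<bar>z\<bar>"
proof (cases "z \<ge> 0")
  case True
  have "1 - z \<le> exp (- z)" using exp_ge_add_one_self[of "- z"] by simp
  then have "(1 - z) * exp z \<le> exp (- z) * exp z" by (intro mult_right_mono) auto
  then have "(1 - z) * exp z \<le> 1" by (simp add: exp_minus)
  then have "exp z - 1 \<le> z * exp z" by (simp add: algebra_simps)
  moreover have "exp z \<ge> 1" using True by simp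
  ultimately show ?thesis using True by simp
next
  case False
  have "1 + z \<le> exp z" by (rule exp_ge_add_one_self)
  moreover have "exp z \<le> 1" using False by simp
  moreover have "exp \<bar>z\<bar> \<ge> 1" by simp
  then have "\<bar>z\<bar> \<le> \<bar>z\<bar> * exp \<bar>z\<bar>" by (simp add: mult_le_cancel_left1)
  moreover have "\<bar>z\<bar> = - z" using False by simp
  ultimately show ?thesis by linarith
qed

lemma exp_diff_quot_bound:
  fixes y r s :: real
  assumes s: "s \<ge> 0" and r: "r > 0" and yr: "\<bar>y - r\<bar> \<le> r / 2" and ne: "y \<noteq> r"
  shows "\<bar>(exp (- (y * s)) - exp (- (r * s))) / (y - r)\<bar> \<le> s * exp (- ((r / 2) * s))"
proof -
  have e: "exp (- (y * s)) - exp (- (r * s)) = exp (- (r * s)) * (exp (- ((y - r) * s)) - 1)"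
    by (simp add: algebra_simps exp_add[symmetric])
  have "\<bar>exp (- ((y - r) * s)) - 1\<bar> \<le> \<bar>- ((y - r) * s)\<bar> * exp \<bar>- ((y - r) * s)\<bar>"
    by (rule exp_sub_one_bound)
  also have "\<bar>- ((y - r) * s)\<bar> = \<bar>y - r\<bar> * s" using s by (simp add: abs_mult)
  finally have b: "\<bar>exp (- ((y - r) * s)) - 1\<bar> \<le> \<bar>y - r\<bar> * s * exp (\<bar>y - r\<bar> * s)" .
  have "\<bar>(exp (- (y * s)) - exp (- (r * s))) / (y - r)\<bar> = exp (- (r * s)) * \<bar>exp (- ((y - r) * s)) - 1\<bar> / \<bar>y - r\<bar>"
    unfolding e by (simp add: abs_mult)
  also have "\<dots> \<le> exp (- (r * s)) * (\<bar>y - r\<bar> * s * exp (\<bar>y - r\<bar> * s)) / \<bar>y - r\<bar>"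
    using b ne by (intro divide_right_mono mult_left_mono) auto
  also have "\<dots> = s * (exp (- (r * s)) * exp (\<bar>y - r\<bar> * s))" using ne by simp
  also have "\<dots> \<le> s * exp (- ((r / 2) * s))"
  proof -
    have "exp (- (r * s)) * exp (\<bar>y - r\<bar> * s) = exp (- (r * s) + \<bar>y - r\<bar> * s)" by (simp only: exp_add)
    also have "\<dots> \<le> exp (- ((r / 2) * s))"
      using yr s mult_right_mono[OF yr s] by (simp add: algebra_simps)
    finally show ?thesis using s by (intro mult_left_mono) auto
  qed
  finally show ?thesis .
qed

lemma laplace_int:
  fixes N :: "'a measure" and w s :: "'a \<Rightarrow> real"
  assumes wm: "w \<in> borel_measurable N" and sm: "s \<in> borel_measurable N"
    and wnn: "\<And>t. w t \<ge> 0" and snn: "\<And>t. s t \<ge> 0"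
    and intg: "\<And>r. r > 0 \<Longrightarrow> integrable N (\<lambda>t. w t * exp (- (r * s t)))"
    and r: "r > 0"
  shows "integrable N (\<lambda>t. w t * s t ^ k * exp (- (r * s t)))"
proof (rule Bochner_Integration.integrable_bound)
  show "integrable N (\<lambda>t. (real k / (r / 2)) ^ k * (w t * exp (- ((r / 2) * s t))))"
    using intg[of "r / 2"] r by simp
  show "(\<lambda>t. w t * s t ^ k * exp (- (r * s t))) \<in> borel_measurable N" using wm sm by measurable
  show "AE t in N. norm (w t * s t ^ k * exp (- (r * s t))) \<le> norm ((real k / (r / 2)) ^ k * (w t * exp (- ((r / 2) * s t))))"
  proof (intro AE_I2)
    fix t
    have b: "s t ^ k * exp (- ((r / 2) * s t)) \<le> (real k / (r / 2)) ^ k"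
      by (rule pow_exp_bound) (use snn r in auto)
    have "w t * s t ^ k * exp (- (r * s t)) = w t * (s t ^ k * exp (- ((r / 2) * s t))) * exp (- ((r / 2) * s t))"
      by (simp add: mult.assoc exp_add[symmetric])
    also have "\<dots> \<le> w t * (real k / (r / 2)) ^ k * exp (- ((r / 2) * s t))"
      using b wnn[of t] by (intro mult_right_mono mult_left_mono) auto
    finally have "w t * s t ^ k * exp (- (r * s t)) \<le> (real k / (r / 2)) ^ k * (w t * exp (- ((r / 2) * s t)))"
      by (simp add: ac_simps)
    moreover have "w t * s t ^ k * exp (- (r * s t)) \<ge> 0" using wnn[of t] snn[of t] by simp
    ultimately show "norm (w t * s t ^ k * exp (- (r * s t))) \<le> norm ((real k / (r / 2)) ^ k * (w t * exp (- ((r / 2) * s t))))"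
      by simp
  qed
qed

lemma laplace_deriv:
  fixes N :: "'a measure" and w s :: "'a \<Rightarrow> real"
  assumes wm: "w \<in> borel_measurable N" and sm: "s \<in> borel_measurable N"
    and wnn: "\<And>t. w t \<ge> 0" and snn: "\<And>t. s t \<ge> 0"
    and intg: "\<And>r. r > 0 \<Longrightarrow> integrable N (\<lambda>t. w t * exp (- (r * s t)))"
    and r: "r > 0"
  shows "((\<lambda>y. \<integral>t. w t * s t ^ k * exp (- (y * s t)) \<partial>N) has_real_derivative
            - (\<integral>t. w t * s t ^ Suc k * exp (- (r * s t)) \<partial>N)) (at r)"
proof -
  note li = laplace_int[OF wm sm wnn snn intg]
  define F where "F = (\<lambda>y. \<integral>t. w t * s t ^ k * exp (- (y * s t)) \<partial>N)"
  have "((\<lambda>y. (F y - F r) / (y - r)) \<longlongrightarrow> - (\<integral>t. w t * s t ^ Suc k * exp (- (r * s t)) \<partial>N)) (at r)"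
    unfolding tendsto_at_iff_sequentially
  proof (intro allI impI)
    fix X :: "nat \<Rightarrow> real"
    assume X: "\<forall>i. X i \<in> UNIV - {r}" and Xl: "X \<longlonglongrightarrow> r"
    have "eventually (\<lambda>i. dist (X i) r < r / 2) sequentially"
      using Xl r unfolding tendsto_iff by (metis half_gt_zero)
    then obtain N0 where N0: "\<And>i. i \<ge> N0 \<Longrightarrow> dist (X i) r < r / 2"
      by (auto simp: eventually_sequentially)
    define Y where "Y = (\<lambda>i. X (i + N0))"
    have Yr: "\<bar>Y i - r\<bar> \<le> r / 2" for i using N0[of "i + N0"] by (simp add: Y_def dist_real_def)
    have Yne: "Y i \<noteq> r" for i using X by (simp add: Y_def)
    have Ypos: "Y i > 0" for i using Yr[of i] r by linarith
    have Yl: "Y \<longlonglongrightarrow> r" unfolding Y_def by (rule LIMSEQ_ignore_initial_segment[OF Xl])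
    define q where "q = (\<lambda>i t. w t * s t ^ k * ((exp (- (Y i * s t)) - exp (- (r * s t))) / (Y i - r)))"
    define ql where "ql = (\<lambda>t. - (w t * s t ^ Suc k * exp (- (r * s t))))"
    define bd where "bd = (\<lambda>t. w t * s t ^ Suc k * exp (- ((r / 2) * s t)))"
    have qm: "q i \<in> borel_measurable N" for i unfolding q_def using wm sm by measurable
    have qlm: "ql \<in> borel_measurable N" unfolding ql_def using wm sm by measurable
    have bdi: "integrable N bd" unfolding bd_def using li[of "r / 2" "Suc k"] r by simp
    have qlim: "(\<lambda>i. q i t) \<longlonglongrightarrow> ql t" for t
    proof -
      have d: "((\<lambda>y. exp (- (y * s t))) has_real_derivative (- s t * exp (- (r * s t)))) (at r)"
        by (auto intro!: derivative_eq_intros)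
      then have "((\<lambda>y. (exp (- (y * s t)) - exp (- (r * s t))) / (y - r)) \<longlongrightarrow> - s t * exp (- (r * s t))) (at r)"
        by (simp add: has_field_derivative_iff)
      then have "((\<lambda>y. (exp (- (y * s t)) - exp (- (r * s t))) / (y - r)) \<circ> Y) \<longlonglongrightarrow> - s t * exp (- (r * s t))"
        unfolding tendsto_at_iff_sequentially using Yne Yl by auto
      then have "(\<lambda>i. w t * s t ^ k * ((exp (- (Y i * s t)) - exp (- (r * s t))) / (Y i - r))) \<longlonglongrightarrow> w t * s t ^ k * (- s t * exp (- (r * s t)))"
        by (intro tendsto_mult_left) (simp add: comp_def)
      moreover have "w t * s t ^ k * (- s t * exp (- (r * s t))) = ql t"
        by (simp add: ql_def mult_ac)
      ultimately show ?thesis by (simp only: q_def)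
    qed
    have qb: "norm (q i t) \<le> bd t" for i t
    proof -
      have "\<bar>(exp (- (Y i * s t)) - exp (- (r * s t))) / (Y i - r)\<bar> \<le> s t * exp (- ((r / 2) * s t))"
        by (rule exp_diff_quot_bound[OF snn r Yr Yne])
      then have "w t * s t ^ k * \<bar>(exp (- (Y i * s t)) - exp (- (r * s t))) / (Y i - r)\<bar> \<le> w t * s t ^ k * (s t * exp (- ((r / 2) * s t)))"
        using wnn[of t] snn[of t] by (intro mult_left_mono) auto
      then show ?thesis using wnn[of t] snn[of t] by (simp add: q_def bd_def abs_mult mult_ac)
    qed
    have lim: "(\<lambda>i. integral\<^sup>L N (q i)) \<longlonglongrightarrow> integral\<^sup>L N ql"
    proof (rule integral_dominated_convergence[OF qlm qm bdi])
      show "AE x in N. (\<lambda>i. q i x) \<longlonglongrightarrow> ql x" by (intro AE_I2 qlim)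
      show "\<And>i. AE x in N. norm (q i x) \<le> bd x" by (intro AE_I2 qb)
    qed
    have eq: "integral\<^sup>L N (q i) = (F (Y i) - F r) / (Y i - r)" for i
    proof -
      have i1: "integrable N (\<lambda>t. w t * s t ^ k * exp (- (Y i * s t)))" by (rule laplace_int[OF wm sm wnn snn intg Ypos])
      have i2: "integrable N (\<lambda>t. w t * s t ^ k * exp (- (r * s t)))" by (rule laplace_int[OF wm sm wnn snn intg r])
      have "integral\<^sup>L N (q i) = (\<integral>t. (w t * s t ^ k * exp (- (Y i * s t)) - w t * s t ^ k * exp (- (r * s t))) / (Y i - r) \<partial>N)"
        unfolding q_def by (intro Bochner_Integration.integral_cong refl) (simp add: algebra_simps diff_divide_distrib)
      also have "\<dots> = (\<integral>t. (w t * s t ^ k * exp (- (Y i * s t)) - w t * s t ^ k * exp (- (r * s t))) \<partial>N) / (Y i - r)"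
        by (rule integral_divide_zero)
      also have "\<dots> = (F (Y i) - F r) / (Y i - r)"
        unfolding F_def using i1 i2 by (simp add: Bochner_Integration.integral_diff)
      finally show ?thesis .
    qed
    have "integral\<^sup>L N ql = - (\<integral>t. w t * s t ^ Suc k * exp (- (r * s t)) \<partial>N)"
      unfolding ql_def by (rule Bochner_Integration.integral_minus)
    then have "(\<lambda>i. (F (Y i) - F r) / (Y i - r)) \<longlonglongrightarrow> - (\<integral>t. w t * s t ^ Suc k * exp (- (r * s t)) \<partial>N)"
      using lim eq by simp
    then have "(\<lambda>i. (F (X (i + N0)) - F r) / (X (i + N0) - r)) \<longlonglongrightarrow> - (\<integral>t. w t * s t ^ Suc k * exp (- (r * s t)) \<partial>N)"
      by (simp add: Y_def)
    then show "((\<lambda>y. (F y - F r) / (y - r)) \<circ> X) \<longlonglongrightarrow> - (\<integral>t. w t * s t ^ Suc k * exp (- (r * s t)) \<partial>N)"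
      unfolding comp_def by (rule LIMSEQ_offset)
  qed
  then show ?thesis unfolding has_field_derivative_iff F_def .
qed

lemma laplace_cm:
  fixes N :: "'a measure" and w s :: "'a \<Rightarrow> real"
  assumes wm: "w \<in> borel_measurable N" and sm: "s \<in> borel_measurable N"
    and wnn: "\<And>t. w t \<ge> 0" and snn: "\<And>t. s t \<ge> 0"
    and intg: "\<And>r. r > 0 \<Longrightarrow> integrable N (\<lambda>t. w t * exp (- (r * s t)))"
  shows "completely_monotonic (\<lambda>r. \<integral>t. w t * exp (- (r * s t)) \<partial>N)"
proof -
  define F where "F = (\<lambda>k y. \<integral>t. w t * s t ^ k * exp (- (y * s t)) \<partial>N)"
  have F0: "(\<lambda>r. \<integral>t. w t * exp (- (r * s t)) \<partial>N) = F 0" by (simp add: F_def)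
  have dF: "((\<lambda>y. (-1) ^ k * F k y) has_real_derivative (-1) ^ Suc k * F (Suc k) x) (at x)" if "x > 0" for k x
  proof -
    have "((\<lambda>y. (-1) ^ k * F k y) has_real_derivative (-1) ^ k * (- F (Suc k) x)) (at x)"
      unfolding F_def by (intro DERIV_cmult laplace_deriv[OF wm sm wnn snn intg that])
    then show ?thesis by simp
  qed
  have ev: "eventually (\<lambda>y. y \<in> {0<..}) (nhds x)" if "x > 0" for x :: real
    using that by (intro eventually_nhds_in_open) auto
  have main: "\<forall>x>0. (deriv ^^ k) (F 0) x = (-1) ^ k * F k x" for k
  proof (induction k)
    case 0
    then show ?case by simp
  next
    case (Suc k)
    show ?case
    proof (intro allI impI)
      fix x :: real assume x: "x > 0"
      have e: "eventually (\<lambda>y. (deriv ^^ k) (F 0) y = (-1) ^ k * F k y) (nhds x)"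
        using ev[OF x] by eventually_elim (use Suc.IH in auto)
      have "(deriv ^^ Suc k) (F 0) x = deriv ((deriv ^^ k) (F 0)) x" by simp
      also have "\<dots> = deriv (\<lambda>y. (-1) ^ k * F k y) x" by (rule deriv_cong_ev[OF e refl])
      also have "\<dots> = (-1) ^ Suc k * F (Suc k) x" by (rule DERIV_imp_deriv[OF dF[OF x]])
      finally show "(deriv ^^ Suc k) (F 0) x = (-1) ^ Suc k * F (Suc k) x" .
    qed
  qed
  have diff: "(deriv ^^ k) (F 0) differentiable (at x)" if x: "x > 0" for k x
  proof -
    have e: "eventually (\<lambda>y. y \<in> UNIV \<longrightarrow> (deriv ^^ k) (F 0) y = (-1) ^ k * F k y) (nhds x)"
      using ev[OF x] by eventually_elim (use main in auto)
    have "((deriv ^^ k) (F 0) has_real_derivative (-1) ^ Suc k * F (Suc k) x) (at x within UNIV)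
        = ((\<lambda>y. (-1) ^ k * F k y) has_real_derivative (-1) ^ Suc k * F (Suc k) x) (at x within UNIV)"
      by (rule has_field_derivative_cong_ev[OF refl e refl refl]) simp
    then have "((deriv ^^ k) (F 0) has_real_derivative (-1) ^ Suc k * F (Suc k) x) (at x)"
      using dF[OF x] by simp
    then show ?thesis unfolding real_differentiable_def by blast
  qed
  have sign: "(-1) ^ k * (deriv ^^ k) (F 0) x \<ge> 0" if x: "x > 0" for k x
  proof -
    have "(-1) ^ k * (deriv ^^ k) (F 0) x = ((-1) ^ k * (-1) ^ k) * F k x"
      using main x by (simp add: mult.assoc)
    also have "\<dots> = F k x" by (simp add: power_mult_distrib[symmetric])
    also have "\<dots> \<ge> 0" unfolding F_def
      by (intro Bochner_Integration.integral_nonneg) (use wnn snn in simp)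
    finally show ?thesis by simp
  qed
  show ?thesis unfolding completely_monotonic_def F0 using diff sign by blast
qed

lemma cm_cong:
  assumes eq: "\<And>x. x > 0 \<Longrightarrow> f x = g x" and g: "completely_monotonic g"
  shows "completely_monotonic f"
proof -
  have ev: "eventually (\<lambda>y. y \<in> {0<..}) (nhds x)" if "x > 0" for x :: real
    using that by (intro eventually_nhds_in_open) auto
  have main: "\<forall>x>0. (deriv ^^ k) f x = (deriv ^^ k) g x" for k
  proof (induction k)
    case 0
    then show ?case using eq by simp
  next
    case (Suc k)
    show ?case
    proof (intro allI impI)
      fix x :: real assume x: "x > 0"
      have e: "eventually (\<lambda>y. (deriv ^^ k) f y = (deriv ^^ k) g y) (nhds x)"
        using ev[OF x] by eventually_elim (use Suc.IH in auto)
      show "(deriv ^^ Suc k) f x = (deriv ^^ Suc k) g x"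
        using deriv_cong_ev[OF e refl] by simp
    qed
  qed
  have diff: "(deriv ^^ k) f differentiable (at x)" if x: "x > 0" for k x
  proof -
    from g x obtain D where D: "((deriv ^^ k) g has_real_derivative D) (at x)"
      unfolding completely_monotonic_def real_differentiable_def by blast
    have e: "eventually (\<lambda>y. y \<in> UNIV \<longrightarrow> (deriv ^^ k) f y = (deriv ^^ k) g y) (nhds x)"
      using ev[OF x] by eventually_elim (use main in auto)
    have "((deriv ^^ k) f has_real_derivative D) (at x within UNIV) = ((deriv ^^ k) g has_real_derivative D) (at x within UNIV)"
      by (rule has_field_derivative_cong_ev[OF refl e refl refl]) simp
    then show ?thesis using D unfolding real_differentiable_def by auto
  qed
  have "(-1) ^ k * (deriv ^^ k) f x \<ge> 0" if x: "x > 0" for k x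
    using main g x unfolding completely_monotonic_def by simp
  then show ?thesis unfolding completely_monotonic_def using diff by blast
qed

lemma inc_gamma_pos:
  assumes lam: "lam > 0" and y: "y > 0"
  shows "inc_gamma lam y > 0"
proof -
  have "exp (- 1) * ((min y 1) powr lam / lam) > 0" using lam y by simp
  then show ?thesis using inc_gamma_lower[OF lam y] by linarith
qed

lemma sf_density:
  fixes M :: "real measure"
  assumes lam: "lam > 0" and M_borel: "sets M = sets borel"
    and conv: "\<forall>x>0. set_integrable M {0<..} (\<lambda>t. inc_gamma lam (x * t) / t powr lam)"
  shows "sigma_finite_measure (density M (\<lambda>t. ennreal (indicator {0<..} t)))"
proof -
  have idm[measurable]: "(\<lambda>t. t) \<in> borel_measurable M" using M_borel by (simp add: measurable_ident_sets)
  define \<psi> where "\<psi> = (\<lambda>t. indicator {0<..} t * (inc_gamma lam t / t powr lam))"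
  have \<psi>i: "integrable M \<psi>"
    using conv[rule_format, of 1] by (simp add: set_integrable_def \<psi>_def)
  have \<psi>m: "\<psi> \<in> borel_measurable M" using \<psi>i by (rule borel_measurable_integrable)
  have \<psi>pos: "\<psi> t > 0" if "t > 0" for t using inc_gamma_pos[OF lam that] that by (simp add: \<psi>_def)
  have \<psi>nn: "\<psi> t \<ge> 0" for t
  proof (cases "t > 0")
    case True
    then show ?thesis using \<psi>pos[OF True] by simp
  qed (simp add: \<psi>_def)
  define D' where "D' = density M (\<lambda>t. ennreal (\<psi> t))"
  have "emeasure D' (space D') = (\<integral>\<^sup>+t. ennreal (\<psi> t) * indicator (space M) t \<partial>M)"
    unfolding D'_def using \<psi>m by (simp add: emeasure_density)
  also have "\<dots> = (\<integral>\<^sup>+t. ennreal (\<psi> t) \<partial>M)"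
    by (intro nn_integral_cong) (simp add: indicator_def)
  also have "\<dots> = ennreal (integral\<^sup>L M \<psi>)"
    by (rule nn_integral_eq_integral[OF \<psi>i]) (simp add: \<psi>nn)
  finally have "emeasure D' (space D') \<noteq> \<infinity>" by simp
  then interpret D': finite_measure D' by (rule finite_measureI)
  define g where "g = (\<lambda>t. ennreal (if t > 0 then 1 / \<psi> t else 0))"
  have gm: "g \<in> borel_measurable D'" unfolding g_def D'_def using \<psi>m by measurable
  have "sigma_finite_measure (density D' g)"
    using D'.sigma_finite_iff_density_finite[OF gm] by (simp add: g_def)
  also have "density D' g = density M (\<lambda>t. ennreal (\<psi> t) * g t)"
    unfolding D'_def by (rule density_density_eq) (use \<psi>m gm in \<open>simp_all add: D'_def\<close>)
  also have "(\<lambda>t. ennreal (\<psi> t) * g t) = (\<lambda>t. ennreal (indicator {0<..} t))"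
  proof
    fix t :: real
    show "ennreal (\<psi> t) * g t = ennreal (indicator {0<..} t)"
    proof (cases "t > 0")
      case True
      then have "\<psi> t * (1 / \<psi> t) = 1" using \<psi>pos[OF True] by simp
      then show ?thesis using True \<psi>nn[of t] by (simp add: g_def ennreal_mult'[symmetric])
    next
      case False
      then show ?thesis by (simp add: g_def)
    qed
  qed
  finally show ?thesis .
qed

lemma powr_exp_bound:
  fixes y r p :: real
  assumes y: "y \<ge> 0" and r: "r > 0" and p: "p > 0"
  shows "y powr p * exp (- (r * y)) \<le> (p / r) powr p"
proof -
  have "r * y / p \<le> exp (r * y / p)"
    using exp_ge_add_one_self[of "r * y / p"] by linarith
  then have "(r * y / p) powr p \<le> exp (r * y / p) powr p"
    using r y p by (intro powr_mono2) auto
  also have "exp (r * y / p) powr p = exp (r * y)"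
    using p by (simp add: powr_def)
  finally have "(r / p) powr p * y powr p \<le> exp (r * y)"
    using r y p by (simp add: powr_mult[symmetric])
  then have "y powr p \<le> exp (r * y) * (p / r) powr p"
    using r p by (simp add: powr_divide field_simps)
  then have "y powr p * exp (- (r * y)) \<le> exp (r * y) * (p / r) powr p * exp (- (r * y))"
    by (intro mult_right_mono) auto
  also have "\<dots> = (p / r) powr p" by (simp add: exp_minus field_simps)
  finally show ?thesis .
qed

lemma cw_bound:
  fixes lam m r t :: real
  assumes lam: "lam > 0" and m: "m \<ge> 1" and r: "r > 0" and t: "t > 0"
  shows "(m / t) powr m / t powr lam / Gamma m * exp (- (r * (m / t)))
     \<le> max (m powr m * lam * exp 1 / Gamma m) (((m + lam) / r) powr (m + lam) / (m powr lam * Gamma m) * lam * exp 1)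
         * (inc_gamma lam t / t powr lam)"
    (is "?L \<le> ?K * _")
proof -
  have Gm: "Gamma m > 0" using m by simp
  have tl: "t powr lam > 0" using t by simp
  have ig: "inc_gamma lam t \<ge> exp (- 1) * ((min t 1) powr lam / lam)" by (rule inc_gamma_lower[OF lam t])
  have K1: "m powr m * lam * exp 1 / Gamma m \<le> ?K" by simp
  have K2: "((m + lam) / r) powr (m + lam) / (m powr lam * Gamma m) * lam * exp 1 \<le> ?K" by simp
  have Kpos: "?K \<ge> 0" using Gm lam by (intro order.trans[OF _ K1]) simp
  show ?thesis
  proof (cases "t \<ge> 1")
    case True
    have a: "(m / t) powr m \<le> m powr m"
      using True m by (intro powr_mono2) (auto simp: divide_le_eq)
    have "?L \<le> m powr m / t powr lam / Gamma m * 1"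
      using a Gm tl r m t by (intro mult_mono divide_right_mono) auto
    also have "\<dots> = (m powr m * lam * exp 1 / Gamma m) * (exp (- 1) * (1 / lam) / t powr lam)"
      using lam by (simp add: exp_minus field_simps)
    also have "\<dots> \<le> ?K * (inc_gamma lam t / t powr lam)"
    proof (intro mult_mono K1 divide_right_mono)
      show "exp (- 1) * (1 / lam) \<le> inc_gamma lam t" using ig True by simp
    qed (use Kpos tl inc_gamma_nonneg[of t lam] t lam in auto)
    finally show ?thesis .
  next
    case False
    define z where "z = m / t"
    have z: "z > 0" using m t by (simp add: z_def)
    have tz: "t = m / z" using z t m by (simp add: z_def field_simps)
    have tp: "t powr lam = m powr lam / z powr lam" using z m by (simp add: tz powr_divide)
    have "?L = z powr m / (m powr lam / z powr lam) / Gamma m * exp (- (r * z))"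
      unfolding z_def[symmetric] tp ..
    also have "\<dots> = z powr (m + lam) * exp (- (r * z)) / (m powr lam * Gamma m)"
      using z m Gm by (simp add: powr_add field_simps)
    finally have "?L = z powr (m + lam) * exp (- (r * z)) / (m powr lam * Gamma m)" .
    also have "\<dots> \<le> ((m + lam) / r) powr (m + lam) / (m powr lam * Gamma m)"
      using powr_exp_bound[of z r "m + lam"] z r m lam Gm by (intro divide_right_mono) auto
    also have "\<dots> = (((m + lam) / r) powr (m + lam) / (m powr lam * Gamma m) * lam * exp 1) * (exp (- 1) * (t powr lam / lam) / t powr lam)"
      using lam tl by (simp add: exp_minus field_simps)
    also have "\<dots> \<le> ?K * (inc_gamma lam t / t powr lam)"
    proof (intro mult_mono K2 divide_right_mono)
      show "exp (- 1) * (t powr lam / lam) \<le> inc_gamma lam t" using ig False by simp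
    qed (use Kpos tl inc_gamma_nonneg[of t lam] t lam in auto)
    finally show ?thesis .
  qed
qed

definition cwf :: "real \<Rightarrow> nat \<Rightarrow> real \<Rightarrow> real" where
  "cwf lam n t = indicator {0<..} t * ((real n / t) powr real n / t powr lam / Gamma (real n))"

definition stf :: "nat \<Rightarrow> real \<Rightarrow> real" where
  "stf n t = (if t > 0 then real n / t else 0)"

definition Lf :: "real \<Rightarrow> real measure \<Rightarrow> nat \<Rightarrow> real \<Rightarrow> real" where
  "Lf lam M n r = (\<integral>t. cwf lam n t * exp (- (r * stf n t)) \<partial>M)"

definition phi :: "real \<Rightarrow> real measure \<Rightarrow> nat \<Rightarrow> real \<Rightarrow> real" where
  "phi lam M n r = r powr (real n - 1) * Lf lam M n r"

lemma cwf_nonneg: "n \<ge> 1 \<Longrightarrow> cwf lam n t \<ge> 0"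
  by (simp add: cwf_def indicator_def)

lemma stf_nonneg: "stf n t \<ge> 0"
  by (simp add: stf_def)

lemma Lf_int:
  fixes M :: "real measure"
  assumes lam: "lam > 0" and M_borel: "sets M = sets borel"
    and conv: "\<forall>x>0. set_integrable M {0<..} (\<lambda>t. inc_gamma lam (x * t) / t powr lam)"
    and n: "n \<ge> 1" and r: "r > 0"
  shows "integrable M (\<lambda>t. cwf lam n t * exp (- (r * stf n t)))"
proof -
  have idm[measurable]: "(\<lambda>t. t) \<in> borel_measurable M" using M_borel by (simp add: measurable_ident_sets)
  define \<psi> where "\<psi> = (\<lambda>t. indicator {0<..} t * (inc_gamma lam t / t powr lam))"
  have \<psi>i: "integrable M \<psi>"
    using conv[rule_format, of 1] by (simp add: set_integrable_def \<psi>_def)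
  define m where "m = real n"
  have m: "m \<ge> 1" using n by (simp add: m_def)
  define K where "K = max (m powr m * lam * exp 1 / Gamma m) (((m + lam) / r) powr (m + lam) / (m powr lam * Gamma m) * lam * exp 1)"
  show ?thesis
  proof (rule Bochner_Integration.integrable_bound)
    show "integrable M (\<lambda>t. K * \<psi> t)" using \<psi>i by simp
    show "(\<lambda>t. cwf lam n t * exp (- (r * stf n t))) \<in> borel_measurable M"
      unfolding cwf_def stf_def by measurable
    show "AE t in M. norm (cwf lam n t * exp (- (r * stf n t))) \<le> norm (K * \<psi> t)"
    proof (intro AE_I2)
      fix t :: real
      show "norm (cwf lam n t * exp (- (r * stf n t))) \<le> norm (K * \<psi> t)"
      proof (cases "t > 0")
        case True
        have b: "cwf lam n t * exp (- (r * stf n t)) \<le> K * \<psi> t"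
          using cw_bound[OF lam m r True] True by (simp add: cwf_def stf_def \<psi>_def K_def m_def)
        have "cwf lam n t * exp (- (r * stf n t)) \<ge> 0" using cwf_nonneg[OF n] by simp
        then show ?thesis using b by simp
      next
        case False
        then show ?thesis by (simp add: cwf_def)
      qed
    qed
  qed
qed

lemma phi_cm:
  fixes M :: "real measure"
  assumes lam: "lam > 0" and M_borel: "sets M = sets borel"
    and conv: "\<forall>x>0. set_integrable M {0<..} (\<lambda>t. inc_gamma lam (x * t) / t powr lam)"
    and n: "n \<ge> 1"
  shows "cm_order (1 - real n) (phi lam M n)"
proof -
  have idm[measurable]: "(\<lambda>t. t) \<in> borel_measurable M" using M_borel by (simp add: measurable_ident_sets)
  have cm: "completely_monotonic (\<lambda>r. \<integral>t. cwf lam n t * exp (- (r * stf n t)) \<partial>M)"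
  proof (rule laplace_cm)
    show "cwf lam n \<in> borel_measurable M" unfolding cwf_def by measurable
    show "stf n \<in> borel_measurable M" unfolding stf_def by measurable
  qed (use cwf_nonneg[OF n] stf_nonneg Lf_int[OF lam M_borel conv n] in auto)
  show ?thesis unfolding cm_order_def
  proof (rule cm_cong[OF _ cm])
    fix x :: real assume x: "x > 0"
    have "x powr (1 - real n) * x powr (real n - 1) = 1"
      using x by (simp add: powr_add[symmetric])
    then show "x powr (1 - real n) * phi lam M n x = (\<integral>t. cwf lam n t * exp (- (x * stf n t)) \<partial>M)"
      unfolding phi_def Lf_def by (simp add: mult.assoc[symmetric])
  qed
qed

definition Ktf :: "real \<Rightarrow> nat \<Rightarrow> real \<Rightarrow> real \<Rightarrow> real" where
  "Ktf lam n x t = indicator {0<..} t * (Gamma (lam + real n) / Gamma (real n) * inc_beta lam (real n) (x / (x + real n / t)) / t powr lam)"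

lemma Ktf_alt:
  assumes "x > 0" "t > 0"
  shows "x / (x + real n / t) = (x * t) / (x * t + real n)"
  using assms by (simp add: field_simps)

lemma Ktf_meas:
  assumes lam: "lam > 0" and n: "n \<ge> 1" and x: "x > 0"
  shows "Ktf lam n x \<in> borel_measurable borel"
proof -
  define m where "m = real n"
  have m: "m \<ge> 1" using n by (simp add: m_def)
  define Bm where "Bm = (\<lambda>t. if t > 0 then inc_beta lam m (x * t / (x * t + m)) else 0)"
  have u01: "0 \<le> x * t / (x * t + m)" "x * t / (x * t + m) \<le> 1" if "t > 0" for t
  proof -
    have "x * t > 0" using that x by simp
    then show "0 \<le> x * t / (x * t + m)" "x * t / (x * t + m) \<le> 1" using m by (simp_all add: divide_le_eq_1)
  qed
  have "mono Bm"
  proof (rule monoI)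
    fix t1 t2 :: real assume le: "t1 \<le> t2"
    show "Bm t1 \<le> Bm t2"
    proof (cases "t1 > 0")
      case False
      show ?thesis
      proof (cases "t2 > 0")
        case True
        then show ?thesis using False inc_beta_nonneg[OF lam _ u01[OF True]] m by (simp add: Bm_def)
      qed (use False in \<open>simp add: Bm_def\<close>)
    next
      case True
      then have t2: "t2 > 0" using le by simp
      have "x * t1 / (x * t1 + m) \<le> x * t2 / (x * t2 + m)"
      proof -
        have "x * t1 * (x * t2 + m) \<le> x * t2 * (x * t1 + m)"
          using le x m by (simp add: algebra_simps)
        moreover have "x * t1 + m > 0" "x * t2 + m > 0" using True t2 x m by (simp_all add: add_pos_pos)
        ultimately show ?thesis by (simp add: divide_le_eq le_divide_eq mult.commute mult.left_commute)
      qed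
      then show ?thesis using True t2 inc_beta_mono[OF lam _ u01(1)[OF True] _ u01(2)[OF t2]] m
        by (simp add: Bm_def)
    qed
  qed
  then have [measurable]: "Bm \<in> borel_measurable borel" by (rule borel_measurable_mono)
  have "Ktf lam n x = (\<lambda>t. Bm t * (indicator {0<..} t * (Gamma (lam + m) / Gamma m / t powr lam)))"
  proof
    fix t :: real
    show "Ktf lam n x t = Bm t * (indicator {0<..} t * (Gamma (lam + m) / Gamma m / t powr lam))"
      by (cases "t > 0") (simp_all add: Ktf_def Bm_def Ktf_alt[OF x] m_def)
  qed
  also have "\<dots> \<in> borel_measurable borel" by measurable
  finally show ?thesis .
qed

lemma Ktf_bound:
  assumes lam: "lam > 0"
  shows "\<exists>C>0. \<forall>n x t. n \<ge> 1 \<longrightarrow> x > 0 \<longrightarrow> 0 \<le> Ktf lam n x t \<and>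
            Ktf lam n x t \<le> C * (indicator {0<..} t * (inc_gamma lam (x * t) / t powr lam))"
proof -
  obtain C where C: "C > 0" and Cb: "\<And>n y. n \<ge> 1 \<Longrightarrow> y > 0 \<Longrightarrow>
     Gamma (lam + real n) / Gamma (real n) * inc_beta lam (real n) (y / (y + real n)) \<le> C * inc_gamma lam y"
    using beta_dom[OF lam] by blast
  have "0 \<le> Ktf lam n x t \<and> Ktf lam n x t \<le> C * (indicator {0<..} t * (inc_gamma lam (x * t) / t powr lam))"
    if n: "n \<ge> 1" and x: "x > 0" for n x t
  proof (cases "t > 0")
    case True
    have xt: "x * t > 0" using x True by simp
    have u: "0 \<le> x * t / (x * t + real n)" "x * t / (x * t + real n) \<le> 1" using xt by auto
    have nn: "inc_beta lam (real n) (x * t / (x * t + real n)) \<ge> 0" using inc_beta_nonneg[OF lam _ u] n by simp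
    have G: "Gamma (lam + real n) / Gamma (real n) > 0" using lam n by simp
    have b: "Gamma (lam + real n) / Gamma (real n) * inc_beta lam (real n) (x * t / (x * t + real n)) \<le> C * inc_gamma lam (x * t)"
      by (rule Cb[OF n xt])
    have tp: "t powr lam > 0" using True by simp
    define P where "P = Gamma (lam + real n) / Gamma (real n) * inc_beta lam (real n) (x * t / (x * t + real n))"
    have P: "P \<ge> 0" "P \<le> C * inc_gamma lam (x * t)" using nn G b unfolding P_def by (simp_all only: zero_le_mult_iff) auto
    have K: "Ktf lam n x t = P / t powr lam"
      unfolding Ktf_def Ktf_alt[OF x True] P_def using True by simp
    have "P / t powr lam \<le> C * inc_gamma lam (x * t) / t powr lam"
      using P tp by (intro divide_right_mono) auto
    then show ?thesis unfolding K using P tp True by simp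
  qed (simp add: Ktf_def)
  then show ?thesis using C by blast
qed

lemma Ktf_lim:
  assumes lam: "lam > 0" and x: "x > 0"
  shows "(\<lambda>n. Ktf lam n x t) \<longlonglongrightarrow> indicator {0<..} t * (inc_gamma lam (x * t) / t powr lam)"
proof (cases "t > 0")
  case True
  have xt: "x * t > 0" using x True by simp
  have "(\<lambda>n. Gamma (lam + real n) / Gamma (real n) * inc_beta lam (real n) (x * t / (x * t + real n)) / t powr lam) \<longlonglongrightarrow> inc_gamma lam (x * t) / t powr lam"
    by (intro tendsto_divide tendsto_const beta_lim[OF lam xt]) (use True in simp)
  then show ?thesis using True by (simp add: Ktf_def Ktf_alt[OF x True])
qed (simp add: Ktf_def)

lemma Lf_cont:
  fixes M :: "real measure"
  assumes lam: "lam > 0" and M_borel: "sets M = sets borel"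
    and conv: "\<forall>x>0. set_integrable M {0<..} (\<lambda>t. inc_gamma lam (x * t) / t powr lam)"
    and n: "n \<ge> 1"
  shows "continuous_on {0<..} (Lf lam M n)"
proof -
  have idm[measurable]: "(\<lambda>t. t) \<in> borel_measurable M" using M_borel by (simp add: measurable_ident_sets)
  have wm: "cwf lam n \<in> borel_measurable M" unfolding cwf_def by measurable
  have sm: "stf n \<in> borel_measurable M" unfolding stf_def by measurable
  have "isCont (Lf lam M n) r" if r: "r > 0" for r
  proof -
    have "((\<lambda>y. \<integral>t. cwf lam n t * stf n t ^ 0 * exp (- (y * stf n t)) \<partial>M) has_real_derivative
            - (\<integral>t. cwf lam n t * stf n t ^ Suc 0 * exp (- (r * stf n t)) \<partial>M)) (at r)"
      by (rule laplace_deriv[OF wm sm]) (use cwf_nonneg[OF n] stf_nonneg Lf_int[OF lam M_borel conv n] r in auto)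
    then have "isCont (\<lambda>y. \<integral>t. cwf lam n t * stf n t ^ 0 * exp (- (y * stf n t)) \<partial>M) r"
      by (rule DERIV_isCont)
    moreover have "(\<lambda>y. \<integral>t. cwf lam n t * stf n t ^ 0 * exp (- (y * stf n t)) \<partial>M) = Lf lam M n"
      by (simp add: Lf_def fun_eq_iff)
    ultimately show ?thesis by simp
  qed
  then show ?thesis by (intro continuous_at_imp_continuous_on) auto
qed

lemma Lf_nonneg: "n \<ge> 1 \<Longrightarrow> Lf lam M n r \<ge> 0"
  unfolding Lf_def by (intro Bochner_Integration.integral_nonneg) (simp add: cwf_nonneg)

lemma phi_rep:
  fixes M :: "real measure"
  assumes lam: "lam > 0" and M_borel: "sets M = sets borel"
    and conv: "\<forall>x>0. set_integrable M {0<..} (\<lambda>t. inc_gamma lam (x * t) / t powr lam)"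
    and n: "n \<ge> 1" and x: "x > 0"
  shows "integrable M (Ktf lam n x)"
    and "set_integrable lborel {0<..} (\<lambda>r. inc_gamma lam (x * r) * phi lam M n r)"
    and "(\<integral>r\<in>{0<..}. inc_gamma lam (x * r) * phi lam M n r \<partial>lborel) = integral\<^sup>L M (Ktf lam n x)"
proof -
  have toM: "f \<in> borel_measurable M" if "f \<in> borel_measurable borel" for f :: "real \<Rightarrow> 'b::topological_space"
  proof -
    have "borel_measurable M = (borel_measurable borel :: (real \<Rightarrow> 'b) set)"
      by (rule measurable_cong_sets[OF M_borel refl])
    then show ?thesis using that by simp
  qed
  define m where "m = real n"
  have m: "m \<ge> 1" using n by (simp add: m_def)
  have Ktm_b[measurable]: "Ktf lam n x \<in> borel_measurable borel" by (rule Ktf_meas[OF lam n x])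
  have Ktm: "Ktf lam n x \<in> borel_measurable M" by (rule toM[OF Ktm_b])
  obtain C where C: "C > 0" and Cb: "\<And>n x t. n \<ge> 1 \<Longrightarrow> x > 0 \<Longrightarrow> 0 \<le> Ktf lam n x t \<and>
            Ktf lam n x t \<le> C * (indicator {0<..} t * (inc_gamma lam (x * t) / t powr lam))"
    using Ktf_bound[OF lam] by blast
  have hi: "integrable M (\<lambda>t. indicator {0<..} t * (inc_gamma lam (x * t) / t powr lam))"
    using conv[rule_format, OF x] by (simp add: set_integrable_def)
  show Kti: "integrable M (Ktf lam n x)"
  proof (rule Bochner_Integration.integrable_bound)
    show "integrable M (\<lambda>t. C * (indicator {0<..} t * (inc_gamma lam (x * t) / t powr lam)))"
      by (rule integrable_mult_left_iff[THEN iffD2]) (simp only: hi simp_thms)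
    show "AE t in M. norm (Ktf lam n x t) \<le> norm (C * (indicator {0<..} t * (inc_gamma lam (x * t) / t powr lam)))"
    proof (intro AE_I2)
      fix t
      have h: "0 \<le> Ktf lam n x t \<and> Ktf lam n x t \<le> C * (indicator {0<..} t * (inc_gamma lam (x * t) / t powr lam))"
        by (rule Cb[OF n x])
      then show "norm (Ktf lam n x t) \<le> norm (C * (indicator {0<..} t * (inc_gamma lam (x * t) / t powr lam)))"
        unfolding real_norm_def by linarith
    qed
  qed (rule Ktm)
  have Ktnn: "Ktf lam n x t \<ge> 0" for t using Cb[OF n x] by simp
  define Gm where "Gm = (\<lambda>y. if y > 0 then inc_gamma lam y else 0)"
  have "mono Gm"
  proof (rule monoI)
    fix y1 y2 :: real assume le: "y1 \<le> y2"
    show "Gm y1 \<le> Gm y2"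
    proof (cases "y1 > 0")
      case True
      then show ?thesis using le inc_gamma_mono[OF lam, of y1 y2] by (simp add: Gm_def)
    next
      case False
      then show ?thesis using inc_gamma_nonneg[of y2 lam] by (simp add: Gm_def)
    qed
  qed
  then have Gm_m[measurable]: "Gm \<in> borel_measurable borel" by (rule borel_measurable_mono)
  have cwf_m[measurable]: "cwf lam n \<in> borel_measurable borel" unfolding cwf_def by measurable
  have stf_m[measurable]: "stf n \<in> borel_measurable borel" unfolding stf_def by measurable
  define F where "F = (\<lambda>t r. indicator {0<..} r * Gm (x * r) * r powr (m - 1) * (cwf lam n t * exp (- (r * stf n t))))"
  have Fnn: "F t r \<ge> 0" for t r
  proof (cases "r > 0")
    case True
    have "Gm (x * r) \<ge> 0" using inc_gamma_nonneg[of "x * r" lam] x True by (simp add: Gm_def)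
    moreover have "cwf lam n t * exp (- (r * stf n t)) \<ge> 0" using cwf_nonneg[OF n] by simp
    ultimately show ?thesis using True by (simp add: F_def)
  qed (simp add: F_def)
  have S1: "ennreal (Ktf lam n x t) = (\<integral>\<^sup>+r. ennreal (F t r) \<partial>lborel)" for t
  proof (cases "t > 0")
    case False
    then have "\<And>r. F t r = 0" by (simp add: F_def cwf_def)
    then have "(\<integral>\<^sup>+r. ennreal (F t r) \<partial>lborel) = 0" by simp
    moreover have "Ktf lam n x t = 0" using False by (simp add: Ktf_def)
    ultimately show ?thesis by (simp only: ennreal_0)
  next
    case True
    define s where "s = m / t"
    have s: "s > 0" using True m by (simp add: s_def)
    have Gm0: "Gamma m > 0" using m by simp
    have tp: "t powr lam > 0" using True by simp
    define c where "c = 1 / (Gamma m * t powr lam)"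
    have c: "c \<ge> 0" using Gm0 tp by (simp add: c_def)
    have ib: "inc_beta lam m (x / (x + s)) \<ge> 0"
      using inc_beta_nonneg[OF lam _, of m "x / (x + s)"] m x s by simp
    have G2: "Gamma (lam + m) \<ge> 0" using lam m by (simp add: less_imp_le)
    have "Ktf lam n x t = c * (Gamma (lam + m) * inc_beta lam m (x / (x + s)))"
      using True by (simp add: Ktf_def c_def s_def m_def)
    then have "ennreal (Ktf lam n x t) = ennreal c * ennreal (Gamma (lam + m) * inc_beta lam m (x / (x + s)))"
      using c by (simp add: ennreal_mult')
    also have "\<dots> = ennreal c * (\<integral>\<^sup>+r. ennreal (indicator {0<..} r * inc_gamma lam (x * r) * (s powr m * r powr (m - 1) * exp (- (s * r)))) \<partial>lborel)"
    proof -
      have mp: "m > 0" using m by simp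
      show ?thesis by (simp only: beta_gamma_ident[OF lam mp x s])
    qed
    also have "\<dots> = (\<integral>\<^sup>+r. ennreal c * ennreal (indicator {0<..} r * inc_gamma lam (x * r) * (s powr m * r powr (m - 1) * exp (- (s * r)))) \<partial>lborel)"
    proof (rule nn_integral_cmult[symmetric])
      have "(\<lambda>r. ennreal (indicator {0<..} r * inc_gamma lam (x * r) * (s powr m * r powr (m - 1) * exp (- (s * r)))))
          = (\<lambda>r. ennreal (indicator {0<..} r * Gm (x * r) * (s powr m * r powr (m - 1) * exp (- (s * r)))))"
        using x by (auto simp: fun_eq_iff Gm_def indicator_def)
      also have "\<dots> \<in> borel_measurable lborel" by measurable
      finally show "(\<lambda>r. ennreal (indicator {0<..} r * inc_gamma lam (x * r) * (s powr m * r powr (m - 1) * exp (- (s * r))))) \<in> borel_measurable lborel" .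
    qed
    also have "\<dots> = (\<integral>\<^sup>+r. ennreal (F t r) \<partial>lborel)"
    proof (intro nn_integral_cong)
      fix r :: real
      show "ennreal c * ennreal (indicator {0<..} r * inc_gamma lam (x * r) * (s powr m * r powr (m - 1) * exp (- (s * r)))) = ennreal (F t r)"
      proof (cases "r > 0")
        case True
        have "c * (indicator {0<..} r * inc_gamma lam (x * r) * (s powr m * r powr (m - 1) * exp (- (s * r)))) = F t r"
          using True \<open>t > 0\<close> x by (simp add: F_def Gm_def cwf_def stf_def c_def s_def m_def mult_ac)
        then show ?thesis using c by (simp add: ennreal_mult'[symmetric])
      next
        case False
        then have "F t r = 0" "indicator {0<..} r * inc_gamma lam (x * r) * (s powr m * r powr (m - 1) * exp (- (s * r))) = 0"
          by (simp_all add: F_def)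
        then show ?thesis by (simp only: ennreal_0 mult_zero_right)
      qed
    qed
    finally show ?thesis .
  qed
  define D where "D = density M (\<lambda>t. ennreal (indicator {0<..} t))"
  have sfD: "sigma_finite_measure D" unfolding D_def by (rule sf_density[OF lam M_borel conv])
  have PS: "pair_sigma_finite D lborel"
    using sfD lborel.sigma_finite_measure_axioms by (simp add: pair_sigma_finite_def)
  have setsD: "sets D = sets borel" using M_borel by (simp add: D_def)
  have Fm: "(\<lambda>(t, r). ennreal (F t r)) \<in> borel_measurable (D \<Otimes>\<^sub>M lborel)"
  proof -
    have "(\<lambda>(t, r). ennreal (F t r)) \<in> borel_measurable (borel \<Otimes>\<^sub>M borel)"
      unfolding F_def by measurable
    moreover have "sets (D \<Otimes>\<^sub>M lborel) = sets (borel \<Otimes>\<^sub>M borel)"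
      by (rule sets_pair_measure_cong[OF setsD]) simp
    then have "borel_measurable (D \<Otimes>\<^sub>M lborel) = (borel_measurable (borel \<Otimes>\<^sub>M borel) :: (real \<times> real \<Rightarrow> ennreal) set)"
      by (rule measurable_cong_sets) simp
    ultimately show ?thesis by simp
  qed
  have innm: "(\<lambda>t. \<integral>\<^sup>+r. ennreal (F t r) \<partial>lborel) \<in> borel_measurable M"
  proof -
    have "(\<lambda>t. \<integral>\<^sup>+r. ennreal (F t r) \<partial>lborel) \<in> borel_measurable borel"
      unfolding F_def by measurable
    then show ?thesis by (rule toM)
  qed
  have indM: "(\<lambda>t. ennreal (indicator {0<..} t :: real)) \<in> borel_measurable M" by (rule toM) measurable
  have dens: "(\<integral>\<^sup>+t. g t \<partial>D) = (\<integral>\<^sup>+ t. ennreal (indicator {0<..} t) * g t \<partial>M)" if "g \<in> borel_measurable M" for g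
    unfolding D_def by (rule nn_integral_density[OF indM that])
  have "(\<integral>\<^sup>+t. ennreal (Ktf lam n x t) \<partial>M) = (\<integral>\<^sup>+t. ennreal (indicator {0<..} t) * (\<integral>\<^sup>+r. ennreal (F t r) \<partial>lborel) \<partial>M)"
  proof (intro nn_integral_cong)
    fix t :: real
    show "ennreal (Ktf lam n x t) = ennreal (indicator {0<..} t) * (\<integral>\<^sup>+r. ennreal (F t r) \<partial>lborel)"
    proof (cases "t > 0")
      case True
      then show ?thesis by (simp add: S1)
    next
      case False
      then have "Ktf lam n x t = 0" by (simp add: Ktf_def)
      then show ?thesis using False by simp
    qed
  qed
  also have "\<dots> = (\<integral>\<^sup>+t. (\<integral>\<^sup>+r. ennreal (F t r) \<partial>lborel) \<partial>D)"
    by (rule dens[OF innm, symmetric])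
  also have "\<dots> = (\<integral>\<^sup>+r. (\<integral>\<^sup>+t. ennreal (F t r) \<partial>D) \<partial>lborel)"
    using pair_sigma_finite.Fubini'[OF PS Fm] by simp
  also have "\<dots> = (\<integral>\<^sup>+r. ennreal (indicator {0<..} r * inc_gamma lam (x * r) * phi lam M n r) \<partial>lborel)"
  proof (intro nn_integral_cong)
    fix r :: real
    have Fmr: "(\<lambda>t. ennreal (F t r)) \<in> borel_measurable M"
    proof -
      have "(\<lambda>t. ennreal (F t r)) \<in> borel_measurable borel" unfolding F_def by measurable
      then show ?thesis by (rule toM)
    qed
    have "(\<integral>\<^sup>+t. ennreal (F t r) \<partial>D) = (\<integral>\<^sup>+t. ennreal (indicator {0<..} t) * ennreal (F t r) \<partial>M)"
      by (rule dens[OF Fmr])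
    also have "\<dots> = (\<integral>\<^sup>+t. ennreal (F t r) \<partial>M)"
      by (intro nn_integral_cong) (simp add: F_def cwf_def indicator_def)
    also have "\<dots> = ennreal (indicator {0<..} r * inc_gamma lam (x * r) * phi lam M n r)"
    proof (cases "r > 0")
      case False
      then have "\<And>t. F t r = 0" by (simp add: F_def)
      then have "(\<integral>\<^sup>+t. ennreal (F t r) \<partial>M) = 0" by simp
      moreover have "indicator {0<..} r * inc_gamma lam (x * r) * phi lam M n r = 0" using False by simp
      ultimately show ?thesis by (simp only: ennreal_0)
    next
      case True
      define A where "A = Gm (x * r) * r powr (m - 1)"
      have A: "A \<ge> 0" using inc_gamma_nonneg[of "x * r" lam] x by (simp add: A_def Gm_def)
      have "(\<integral>\<^sup>+t. ennreal (F t r) \<partial>M) = (\<integral>\<^sup>+t. ennreal A * ennreal (cwf lam n t * exp (- (r * stf n t))) \<partial>M)"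
      proof (intro nn_integral_cong)
        fix t
        show "ennreal (F t r) = ennreal A * ennreal (cwf lam n t * exp (- (r * stf n t)))"
          using True A by (simp add: F_def A_def ennreal_mult'[symmetric] mult_ac)
      qed
      also have "\<dots> = ennreal A * (\<integral>\<^sup>+t. ennreal (cwf lam n t * exp (- (r * stf n t))) \<partial>M)"
        by (rule nn_integral_cmult, rule toM) measurable
      also have "(\<integral>\<^sup>+t. ennreal (cwf lam n t * exp (- (r * stf n t))) \<partial>M) = ennreal (Lf lam M n r)"
        unfolding Lf_def
        by (rule nn_integral_eq_integral[OF Lf_int[OF lam M_borel conv n True]]) (simp add: cwf_nonneg[OF n])
      also have "ennreal A * ennreal (Lf lam M n r) = ennreal (indicator {0<..} r * inc_gamma lam (x * r) * phi lam M n r)"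
      proof -
        have L0: "Lf lam M n r \<ge> 0" by (rule Lf_nonneg[OF n])
        have "ennreal A * ennreal (Lf lam M n r) = ennreal (A * Lf lam M n r)" using A by (simp add: ennreal_mult')
        also have "A * Lf lam M n r = indicator {0<..} r * inc_gamma lam (x * r) * phi lam M n r"
          using True x by (simp add: A_def Gm_def phi_def m_def mult_ac)
        finally show ?thesis .
      qed
      finally show ?thesis .
    qed
    finally show "(\<integral>\<^sup>+t. ennreal (F t r) \<partial>D) = ennreal (indicator {0<..} r * inc_gamma lam (x * r) * phi lam M n r)" .
  qed
  finally have E: "(\<integral>\<^sup>+r. ennreal (indicator {0<..} r * inc_gamma lam (x * r) * phi lam M n r) \<partial>lborel) = ennreal (integral\<^sup>L M (Ktf lam n x))"
    using nn_integral_eq_integral[OF Kti] Ktnn by simp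
  define g where "g = (\<lambda>r. indicator {0<..} r * inc_gamma lam (x * r) * phi lam M n r)"
  have gnn: "g r \<ge> 0" for r
    using inc_gamma_nonneg[of "x * r" lam] x Lf_nonneg[OF n, of lam M r]
    by (cases "r > 0") (simp_all add: g_def phi_def)
  have gm: "g \<in> borel_measurable lborel"
  proof -
    have c: "continuous_on {0<..} (phi lam M n)"
      unfolding phi_def by (intro continuous_intros Lf_cont[OF lam M_borel conv n]) auto
    have "(\<lambda>r. indicator {0<..} r *\<^sub>R phi lam M n r) \<in> borel_measurable borel"
      by (rule borel_measurable_continuous_on_indicator[OF _ c]) simp
    then have [measurable]: "(\<lambda>r. indicator {0<..} r * phi lam M n r) \<in> borel_measurable borel" by simp
    have "g = (\<lambda>r. Gm (x * r) * (indicator {0<..} r * phi lam M n r))"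
      using x by (auto simp: fun_eq_iff g_def Gm_def indicator_def zero_less_mult_iff)
    also have "\<dots> \<in> borel_measurable lborel" by measurable
    finally show ?thesis .
  qed
  have gfin: "(\<integral>\<^sup>+r. ennreal (g r) \<partial>lborel) < \<infinity>" using E by (simp add: g_def)
  note gi = nn_fin_integrable[OF gm gnn gfin]
  show "set_integrable lborel {0<..} (\<lambda>r. inc_gamma lam (x * r) * phi lam M n r)"
    using gi(1) by (simp add: set_integrable_def g_def mult.assoc)
  have "ennreal (integral\<^sup>L lborel g) = ennreal (integral\<^sup>L M (Ktf lam n x))"
    using gi(2) E by (simp add: g_def)
  moreover have "integral\<^sup>L lborel g \<ge> 0" by (simp add: gnn)
  moreover have "integral\<^sup>L M (Ktf lam n x) \<ge> 0" by (simp add: Ktnn)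
  ultimately have "integral\<^sup>L lborel g = integral\<^sup>L M (Ktf lam n x)" by simp
  then show "(\<integral>r\<in>{0<..}. inc_gamma lam (x * r) * phi lam M n r \<partial>lborel) = integral\<^sup>L M (Ktf lam n x)"
    by (simp add: set_lebesgue_integral_def g_def mult.assoc)
qed

lemma fn_int_eq:
  fixes M :: "real measure"
  shows "Gamma (lam + real n) / Gamma (real n)
           * (\<integral>t\<in>{0<..}. inc_beta lam (real n) (x / (x + real n / t)) / t powr lam \<partial>M)
         = integral\<^sup>L M (Ktf lam n x)"
proof -
  define c where "c = Gamma (lam + real n) / Gamma (real n)"
  define G where "G = (\<lambda>t. indicator {0<..} t *\<^sub>R (inc_beta lam (real n) (x / (x + real n / t)) / t powr lam))"
  have "c * (\<integral>t\<in>{0<..}. inc_beta lam (real n) (x / (x + real n / t)) / t powr lam \<partial>M) = c * integral\<^sup>L M G"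
    unfolding set_lebesgue_integral_def G_def ..
  also have "\<dots> = integral\<^sup>L M (\<lambda>t. c * G t)" by (rule integral_mult_right_zero[symmetric])
  also have "(\<lambda>t. c * G t) = Ktf lam n x"
    by (simp add: fun_eq_iff Ktf_def c_def G_def)
  finally show ?thesis unfolding c_def .
qed

theorem proposition2p7:
  fixes lam a b :: real and M :: "real measure"
    and f :: "real \<Rightarrow> real" and fn :: "nat \<Rightarrow> real \<Rightarrow> real"
  assumes lam_pos: "lam > 0"
    and a_nonneg: "a \<ge> 0" and b_nonneg: "b \<ge> 0"
    and M_borel: "sets M = sets borel"
    and conv: "\<forall>x>0. set_integrable M {0<..} (\<lambda>t. inc_gamma lam (x * t) / t powr lam)"
    and f_def: "\<forall>x>0. f x = a * x powr lam + b
                  + (\<integral>t\<in>{0<..}. inc_gamma lam (x * t) / t powr lam \<partial>M)"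
    and fn_def: "\<forall>n\<ge>1. \<forall>x>0. fn n x = a * x powr lam + b
                  + Gamma (lam + real n) / Gamma (real n)
                    * (\<integral>t\<in>{0<..}. inc_beta lam (real n) (x / (x + real n / t)) / t powr lam \<partial>M)"
  shows "(\<forall>n\<ge>1. fn n \<in> thorin_bernstein lam (1 - real n))
       \<and> (\<forall>x>0. (\<lambda>n. fn n x) \<longlonglongrightarrow> f x)"
proof
  have fnK: "fn n x = a * x powr lam + b + integral\<^sup>L M (Ktf lam n x)" if "n \<ge> 1" "x > 0" for n x
    by (subst fn_int_eq[symmetric]) (rule fn_def[rule_format, OF that])
  show "\<forall>n\<ge>1. fn n \<in> thorin_bernstein lam (1 - real n)"
  proof (intro allI impI)
    fix n :: nat assume n: "n \<ge> 1"
    have "\<forall>x>0. set_integrable lborel {0<..} (\<lambda>t. inc_gamma lam (x * t) * phi lam M n t) \<and>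
            fn n x = a * x powr lam + b + (\<integral>t\<in>{0<..}. inc_gamma lam (x * t) * phi lam M n t \<partial>lborel)"
    proof (intro allI impI conjI)
      fix x :: real assume x: "x > 0"
      show "set_integrable lborel {0<..} (\<lambda>t. inc_gamma lam (x * t) * phi lam M n t)"
        by (rule phi_rep(2)[OF lam_pos M_borel conv n x])
      show "fn n x = a * x powr lam + b + (\<integral>t\<in>{0<..}. inc_gamma lam (x * t) * phi lam M n t \<partial>lborel)"
        using fnK[OF n x] phi_rep(3)[OF lam_pos M_borel conv n x] by simp
    qed
    then show "fn n \<in> thorin_bernstein lam (1 - real n)"
      unfolding thorin_bernstein_def using a_nonneg b_nonneg phi_cm[OF lam_pos M_borel conv n] by blast
  qed
  show "\<forall>x>0. (\<lambda>n. fn n x) \<longlonglongrightarrow> f x"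
  proof (intro allI impI)
    fix x :: real assume x: "x > 0"
    define h where "h = (\<lambda>t. indicator {0<..} t * (inc_gamma lam (x * t) / t powr lam))"
    have hi: "integrable M h"
      using conv[rule_format, OF x] by (simp add: set_integrable_def h_def)
    have hm: "h \<in> borel_measurable M" using hi by (rule borel_measurable_integrable)
    obtain C where C: "C > 0" and Cb: "\<And>n x t. n \<ge> 1 \<Longrightarrow> x > 0 \<Longrightarrow> 0 \<le> Ktf lam n x t \<and>
            Ktf lam n x t \<le> C * (indicator {0<..} t * (inc_gamma lam (x * t) / t powr lam))"
      using Ktf_bound[OF lam_pos] by blast
    have toM: "g \<in> borel_measurable M" if "g \<in> borel_measurable borel" for g :: "real \<Rightarrow> real"
    proof -
      have "borel_measurable M = (borel_measurable borel :: (real \<Rightarrow> real) set)"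
        by (rule measurable_cong_sets[OF M_borel refl])
      then show ?thesis using that by simp
    qed
    have lim: "(\<lambda>i. integral\<^sup>L M (Ktf lam (i + 1) x)) \<longlonglongrightarrow> integral\<^sup>L M h"
    proof (rule integral_dominated_convergence[where w="\<lambda>t. C * h t"])
      show "h \<in> borel_measurable M" by (rule hm)
      show "\<And>i. Ktf lam (i + 1) x \<in> borel_measurable M"
        by (rule toM, rule Ktf_meas[OF lam_pos _ x]) simp
      show "integrable M (\<lambda>t. C * h t)" using hi by simp
      show "AE t in M. (\<lambda>i. Ktf lam (i + 1) x t) \<longlonglongrightarrow> h t"
        unfolding h_def by (intro AE_I2 LIMSEQ_ignore_initial_segment Ktf_lim[OF lam_pos x])
      show "\<And>i. AE t in M. norm (Ktf lam (i + 1) x t) \<le> C * h t"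
      proof (intro AE_I2)
        fix i t
        have "0 \<le> Ktf lam (i + 1) x t \<and> Ktf lam (i + 1) x t \<le> C * h t"
          unfolding h_def by (rule Cb) (use x in auto)
        then show "norm (Ktf lam (i + 1) x t) \<le> C * h t" by simp
      qed
    qed
    have "(\<lambda>i. a * x powr lam + b + integral\<^sup>L M (Ktf lam (i + 1) x)) \<longlonglongrightarrow> a * x powr lam + b + integral\<^sup>L M h"
      by (intro tendsto_add tendsto_const lim)
    moreover have "fn (i + 1) x = a * x powr lam + b + integral\<^sup>L M (Ktf lam (i + 1) x)" for i
      by (rule fnK) (use x in auto)
    moreover have "f x = a * x powr lam + b + integral\<^sup>L M h"
      using f_def x by (simp add: set_lebesgue_integral_def h_def)
    ultimately have "(\<lambda>i. fn (i + 1) x) \<longlonglongrightarrow> f x" by simp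
    then show "(\<lambda>n. fn n x) \<longlonglongrightarrow> f x" by (rule LIMSEQ_offset)
  qed
qed

end
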